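(* Let $\mathbf{E}\subseteq\mathbf{A}$ be finite symmetric integral relation algebras such that $\mathbf{A}$ is a special extension of $\mathbf{E}$, and let $\mathbf{B}$ be the subalgebra of $\mathbf{C}_{\mathbf{E}}(\mathbf{A})$ generated by the set of atoms of $\mathbf{C}_{\mathbf{E}}(\mathbf{A})$. Then: (i) $\mathbf{B}$ is countable, atomic, symmetric, integral, and generated by its atoms; (ii) $\mathbf{C}_{\mathbf{E}}(\mathbf{A})$ and $\mathbf{B}$ have the same atom structure; (iii) $\mathbf{C}_{\mathbf{E}}(\mathbf{A})$ is isomorphic to the complex algebra of the atom structure of $\mathbf{B}$; (iv) $\mathbf{C}_{\mathbf{E}}(\mathbf{A})$ is the completion of $\mathbf{B}$; (v) there are subalgebras $\mathbf{E}'\subseteq\mathbf{A}'\subseteq\mathbf{C}_{\mathbf{E}}(\mathbf{A})$ with $\mathbf{E}'\cong\mathbf{E}$ and $\mathbf{A}'\cong\mathbf{A}$, namely the images of $\mathbf{E}$ and $\mathbf{A}$ under $a\mapsto J(a,0)$; (vi) every finitely generated subalgebra of $\mathbf{B}$ is finite; (vii) every element of $\mathbf{B}$ is almost the same as an element of $\mathbf{E}'$.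
   Context: Relation algebras are in the sense of Tarski; $1'$ identity, $0'$ diversity element (complement of $1'$), $;$ relative product, $\overline{x}$ Boolean complement; integral means $1'$ is an atom, symmetric means $x^{\smile}=x$ for all $x$; a diversity atom is an atom below $0'$. $\mathsf{NA}$ denotes the class of non-associative relation algebras (all relation algebra axioms except associativity of $;$). Special extension: for finite symmetric integral relation algebras $\mathbf{E}\subseteq\mathbf{A}$, $\mathbf{A}$ is a special extension of $\mathbf{E}$ if for all diversity atoms $a,b,c$ of $\mathbf{E}$: (1) if not $a=b=c$ and $a;b\ge c$, then $x;y\ge c$ whenever $x,y$ are atoms of $\mathbf{A}$ with $x\le a$, $y\le b$; (2) if $a;a\ge a$ then $x;y\cdot a\neq 0$ whenever $x,y$ are atoms of $\mathbf{A}$ with $x,y\le a$. The algebra $\mathbf{C}_{\mathbf{E}}(\mathbf{A})$: for each atom $x$ of $\mathbf{A}$ let $c(x)$ be the atom of $\mathbf{E}$ with $x\le c(x)$. Let $T\subseteq\omega^3$ be given by $T(i,j,k)$ iff $(i\le j=k)$ or $(j\le k=i)$ or $(k\le i=j)$. Let $At=\{1'\}\cup\{x^{(i)}: x \text{ a diversity atom of }\mathbf{A}, i\in\omega\}$ (distinct formal symbols). Let $C\subseteq At^3$ consist of all permutations of the triples $(1',1',1')$, $(1',x^{(i)},x^{(i)})$, and $(x^{(i)},y^{(j)},z^{(k)})$ for diversity atoms $x,y,z$ of $\mathbf{A}$ and $i,j,k\in\omega$ such that $x;y\ge z$ in $\mathbf{A}$ and, if $c(x)=c(y)=c(z)$,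 then $T(i,j,k)$. $\mathbf{C}_{\mathbf{E}}(\mathbf{A})$ is the algebra of all subsets of $At$ with set-theoretic Boolean operations, identity $\{1'\}$, converse the identity map, and $X;Y=\{w:\exists u\in X,\exists v\in Y,(u,v,w)\in C\}$; it is a complete atomic member of $\mathsf{NA}$ whose atoms are (identified with) the elements of $At$. For $a\in\mathbf{A}$ and $n\in\omega$, $J(a,n)$ is the join of all $x^{(i)}$ with $x$ a diversity atom of $\mathbf{A}$, $x\le a$, $n\le i$, together with $1'$ if $1'\le a$. Atom structure and complex algebra: the atom structure of an atomic algebra in $\mathsf{NA}$ is $\langle At,C,{}^{\smile},I\rangle$ with $C=\{(x,y,z):x;y\ge z\}$ on atoms and $I$ the atoms below $1'$; its complex algebra is the algebra of subsets of the atoms with $X;Y=\{z:\exists x\in X,\exists y\in Y,(x,y,z)\in C\}$, etc. A completion of $\mathbf{B}$ is a complete algebra $\mathbf{C}$ with $\mathbf{B}$ a dense subalgebra (below every nonzero element of $\mathbf{C}$ lies a nonzero element of $\mathbf{B}$). Two elements of an atomic algebra are almost the same if their symmetric difference is the join of finitely many atoms. *)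

theory Defs
  imports Main "HOL-Library.Countable_Set"
begin

record 'a ra =
  rcar   :: "'a set"
  rjoin  :: "'a \<Rightarrow> 'a \<Rightarrow> 'a"
  rmeet  :: "'a \<Rightarrow> 'a \<Rightarrow> 'a"
  rcompl :: "'a \<Rightarrow> 'a"
  rzero  :: "'a"
  rone   :: "'a"
  rid    :: "'a"
  rconv  :: "'a \<Rightarrow> 'a"
  rcomp  :: "'a \<Rightarrow> 'a \<Rightarrow> 'a"

definition leq :: "('a, 'm) ra_scheme \<Rightarrow> 'a \<Rightarrow> 'a \<Rightarrow> bool" where
  "leq R x y \<longleftrightarrow> rjoin R x y = y"

definition is_BA :: "('a, 'm) ra_scheme \<Rightarrow> bool" where
  "is_BA R \<longleftrightarrow>
    rzero R \<in> rcar R \<and> rone R \<in> rcar R \<and>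
    (\<forall>x\<in>rcar R. \<forall>y\<in>rcar R. rjoin R x y \<in> rcar R \<and> rmeet R x y \<in> rcar R) \<and>
    (\<forall>x\<in>rcar R. rcompl R x \<in> rcar R) \<and>
    (\<forall>x\<in>rcar R. \<forall>y\<in>rcar R. rjoin R x y = rjoin R y x \<and> rmeet R x y = rmeet R y x) \<and>
    (\<forall>x\<in>rcar R. \<forall>y\<in>rcar R. \<forall>z\<in>rcar R.
        rjoin R (rjoin R x y) z = rjoin R x (rjoin R y z) \<and>
        rmeet R (rmeet R x y) z = rmeet R x (rmeet R y z) \<and>
        rmeet R x (rjoin R y z) = rjoin R (rmeet R x y) (rmeet R x z)) \<and>
    (\<forall>x\<in>rcar R. \<forall>y\<in>rcar R. rjoin R x (rmeet R x y) = x \<and> rmeet R x (rjoin R x y) = x) \<and>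
    (\<forall>x\<in>rcar R. rjoin R x (rcompl R x) = rone R \<and> rmeet R x (rcompl R x) = rzero R)"

definition is_NA :: "('a, 'm) ra_scheme \<Rightarrow> bool" where
  "is_NA R \<longleftrightarrow> is_BA R \<and>
    rid R \<in> rcar R \<and>
    (\<forall>x\<in>rcar R. rconv R x \<in> rcar R) \<and>
    (\<forall>x\<in>rcar R. \<forall>y\<in>rcar R. rcomp R x y \<in> rcar R) \<and>
    (\<forall>x\<in>rcar R. \<forall>y\<in>rcar R. \<forall>z\<in>rcar R.
        rcomp R (rjoin R x y) z = rjoin R (rcomp R x z) (rcomp R y z)) \<and>
    (\<forall>x\<in>rcar R. rcomp R x (rid R) = x) \<and>
    (\<forall>x\<in>rcar R. rconv R (rconv R x) = x) \<and>
    (\<forall>x\<in>rcar R. \<forall>y\<in>rcar R. rconv R (rjoin R x y) = rjoin R (rconv R x) (rconv R y)) \<and>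
    (\<forall>x\<in>rcar R. \<forall>y\<in>rcar R. rconv R (rcomp R x y) = rcomp R (rconv R y) (rconv R x)) \<and>
    (\<forall>x\<in>rcar R. \<forall>y\<in>rcar R.
        rjoin R (rcomp R (rconv R x) (rcompl R (rcomp R x y))) (rcompl R y) = rcompl R y)"

definition is_RA :: "('a, 'm) ra_scheme \<Rightarrow> bool" where
  "is_RA R \<longleftrightarrow> is_NA R \<and>
    (\<forall>x\<in>rcar R. \<forall>y\<in>rcar R. \<forall>z\<in>rcar R.
        rcomp R (rcomp R x y) z = rcomp R x (rcomp R y z))"

definition atoms :: "('a, 'm) ra_scheme \<Rightarrow> 'a set" where
  "atoms R = {a \<in> rcar R. a \<noteq> rzero R \<and>
      (\<forall>x\<in>rcar R. leq R x a \<longrightarrow> x = rzero R \<or> x = a)}"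

definition diversity_atoms :: "('a, 'm) ra_scheme \<Rightarrow> 'a set" where
  "diversity_atoms R = {a \<in> atoms R. leq R a (rcompl R (rid R))}"

definition atomic :: "('a, 'm) ra_scheme \<Rightarrow> bool" where
  "atomic R \<longleftrightarrow> (\<forall>x\<in>rcar R. x \<noteq> rzero R \<longrightarrow> (\<exists>a\<in>atoms R. leq R a x))"

definition symmetric :: "('a, 'm) ra_scheme \<Rightarrow> bool" where
  "symmetric R \<longleftrightarrow> (\<forall>x\<in>rcar R. rconv R x = x)"

definition integral :: "('a, 'm) ra_scheme \<Rightarrow> bool" where
  "integral R \<longleftrightarrow> rid R \<in> atoms R"

definition restr :: "('a, 'm) ra_scheme \<Rightarrow> 'a set \<Rightarrow> ('a, 'm) ra_scheme" where
  "restr R S = R\<lparr>rcar := S\<rparr>"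

definition subalg :: "'a set \<Rightarrow> ('a, 'm) ra_scheme \<Rightarrow> bool" where
  "subalg S R \<longleftrightarrow> S \<subseteq> rcar R \<and>
    rzero R \<in> S \<and> rone R \<in> S \<and> rid R \<in> S \<and>
    (\<forall>x\<in>S. rcompl R x \<in> S \<and> rconv R x \<in> S) \<and>
    (\<forall>x\<in>S. \<forall>y\<in>S. rjoin R x y \<in> S \<and> rmeet R x y \<in> S \<and> rcomp R x y \<in> S)"

definition Sg :: "('a, 'm) ra_scheme \<Rightarrow> 'a set \<Rightarrow> 'a set" where
  "Sg R X = \<Inter>{S. subalg S R \<and> X \<subseteq> S}"

definition generated_by_atoms :: "('a, 'm) ra_scheme \<Rightarrow> bool" where
  "generated_by_atoms R \<longleftrightarrow> Sg R (atoms R) = rcar R"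

definition iso :: "('a \<Rightarrow> 'b) \<Rightarrow> ('a, 'm) ra_scheme \<Rightarrow> ('b, 'n) ra_scheme \<Rightarrow> bool" where
  "iso f R S \<longleftrightarrow> bij_betw f (rcar R) (rcar S) \<and>
    f (rzero R) = rzero S \<and> f (rone R) = rone S \<and> f (rid R) = rid S \<and>
    (\<forall>x\<in>rcar R. f (rcompl R x) = rcompl S (f x) \<and> f (rconv R x) = rconv S (f x)) \<and>
    (\<forall>x\<in>rcar R. \<forall>y\<in>rcar R.
        f (rjoin R x y) = rjoin S (f x) (f y) \<and>
        f (rmeet R x y) = rmeet S (f x) (f y) \<and>
        f (rcomp R x y) = rcomp S (f x) (f y))"

definition isomorphic :: "('a, 'm) ra_scheme \<Rightarrow> ('b, 'n) ra_scheme \<Rightarrow> bool" where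
  "isomorphic R S \<longleftrightarrow> (\<exists>f. iso f R S)"

definition is_lub :: "('a, 'm) ra_scheme \<Rightarrow> 'a set \<Rightarrow> 'a \<Rightarrow> bool" where
  "is_lub R X s \<longleftrightarrow> s \<in> rcar R \<and> (\<forall>x\<in>X. leq R x s) \<and>
     (\<forall>u\<in>rcar R. (\<forall>x\<in>X. leq R x u) \<longrightarrow> leq R s u)"

definition complete :: "('a, 'm) ra_scheme \<Rightarrow> bool" where
  "complete R \<longleftrightarrow> (\<forall>X. X \<subseteq> rcar R \<longrightarrow> (\<exists>s. is_lub R X s))"

definition dense_sub :: "'a set \<Rightarrow> ('a, 'm) ra_scheme \<Rightarrow> bool" where
  "dense_sub S R \<longleftrightarrow> (\<forall>x\<in>rcar R. x \<noteq> rzero R \<longrightarrow>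
      (\<exists>b\<in>S. b \<noteq> rzero R \<and> leq R b x))"

definition completion_of :: "('a, 'm) ra_scheme \<Rightarrow> ('a, 'm) ra_scheme \<Rightarrow> bool" where
  "completion_of C B \<longleftrightarrow> complete C \<and> subalg (rcar B) C \<and> B = restr C (rcar B) \<and>
     dense_sub (rcar B) C"

definition almost_same :: "('a, 'm) ra_scheme \<Rightarrow> 'a \<Rightarrow> 'a \<Rightarrow> bool" where
  "almost_same R x y \<longleftrightarrow> (\<exists>F. finite F \<and> F \<subseteq> atoms R \<and>
     is_lub R F (rjoin R (rmeet R x (rcompl R y)) (rmeet R y (rcompl R x))))"

record 'b atstr =
  ats_at  :: "'b set"
  ats_C   :: "('b \<times> 'b \<times> 'b) set"
  ats_cnv :: "'b \<Rightarrow> 'b"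
  ats_I   :: "'b set"

definition at_struct :: "('a, 'm) ra_scheme \<Rightarrow> 'a atstr" where
  "at_struct R = \<lparr> ats_at = atoms R,
     ats_C = {(x, y, z). x \<in> atoms R \<and> y \<in> atoms R \<and> z \<in> atoms R \<and> leq R z (rcomp R x y)},
     ats_cnv = (\<lambda>x. if x \<in> atoms R then rconv R x else undefined),
     ats_I = {x \<in> atoms R. leq R x (rid R)} \<rparr>"

definition Cm :: "'b atstr \<Rightarrow> 'b set ra" where
  "Cm S = \<lparr> rcar = Pow (ats_at S), rjoin = (\<union>), rmeet = (\<inter>),
     rcompl = (\<lambda>X. ats_at S - X), rzero = {}, rone = ats_at S, rid = ats_I S,
     rconv = (\<lambda>X. ats_cnv S ` X),
     rcomp = (\<lambda>X Y. {z. \<exists>x\<in>X. \<exists>y\<in>Y. (x, y, z) \<in> ats_C S}) \<rparr>"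

text \<open>E is (the carrier of) a subalgebra of A.\<close>
definition special_extension :: "'a set \<Rightarrow> ('a, 'm) ra_scheme \<Rightarrow> bool" where
  "special_extension E A \<longleftrightarrow>
    (\<forall>a\<in>diversity_atoms (restr A E). \<forall>b\<in>diversity_atoms (restr A E).
     \<forall>c\<in>diversity_atoms (restr A E).
       ((\<not> (a = b \<and> b = c) \<and> leq A c (rcomp A a b)) \<longrightarrow>
          (\<forall>x\<in>atoms A. \<forall>y\<in>atoms A. leq A x a \<longrightarrow> leq A y b \<longrightarrow> leq A c (rcomp A x y))) \<and>
       (leq A a (rcomp A a a) \<longrightarrow>
          (\<forall>x\<in>atoms A. \<forall>y\<in>atoms A. leq A x a \<longrightarrow> leq A y a \<longrightarrow>
             rmeet A (rcomp A x y) a \<noteq> rzero A)))"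

datatype 'a catom = CId | CDiv 'a nat

definition cE :: "'a set \<Rightarrow> ('a, 'm) ra_scheme \<Rightarrow> 'a \<Rightarrow> 'a" where
  "cE E A x = (THE e. e \<in> atoms (restr A E) \<and> leq A x e)"

definition Trel :: "nat \<Rightarrow> nat \<Rightarrow> nat \<Rightarrow> bool" where
  "Trel i j k \<longleftrightarrow> (i \<le> j \<and> j = k) \<or> (j \<le> k \<and> k = i) \<or> (k \<le> i \<and> i = j)"

definition CAt :: "('a, 'm) ra_scheme \<Rightarrow> 'a catom set" where
  "CAt A = {CId} \<union> {CDiv x i | x i. x \<in> diversity_atoms A}"

fun Cbase :: "'a set \<Rightarrow> ('a, 'm) ra_scheme \<Rightarrow> 'a catom \<Rightarrow> 'a catom \<Rightarrow> 'a catom \<Rightarrow> bool" where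
  "Cbase E A CId CId CId = True"
| "Cbase E A CId (CDiv x i) (CDiv y j) \<longleftrightarrow> x \<in> diversity_atoms A \<and> x = y \<and> i = j"
| "Cbase E A (CDiv x i) (CDiv y j) (CDiv z k) \<longleftrightarrow>
     x \<in> diversity_atoms A \<and> y \<in> diversity_atoms A \<and> z \<in> diversity_atoms A \<and>
     leq A z (rcomp A x y) \<and>
     ((cE E A x = cE E A y \<and> cE E A y = cE E A z) \<longrightarrow> Trel i j k)"
| "Cbase E A _ _ _ = False"

definition Ctri :: "'a set \<Rightarrow> ('a, 'm) ra_scheme \<Rightarrow> 'a catom \<Rightarrow> 'a catom \<Rightarrow> 'a catom \<Rightarrow> bool" where
  "Ctri E A u v w \<longleftrightarrow>
     Cbase E A u v w \<or> Cbase E A u w v \<or> Cbase E A v u w \<or>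
     Cbase E A v w u \<or> Cbase E A w u v \<or> Cbase E A w v u"

definition CEA :: "'a set \<Rightarrow> ('a, 'm) ra_scheme \<Rightarrow> 'a catom set ra" where
  "CEA E A = \<lparr> rcar = Pow (CAt A), rjoin = (\<union>), rmeet = (\<inter>),
     rcompl = (\<lambda>X. CAt A - X), rzero = {}, rone = CAt A, rid = {CId},
     rconv = (\<lambda>X. X),
     rcomp = (\<lambda>X Y. {w. \<exists>u\<in>X. \<exists>v\<in>Y. Ctri E A u v w}) \<rparr>"

definition Jfun :: "('a, 'm) ra_scheme \<Rightarrow> 'a \<Rightarrow> nat \<Rightarrow> 'a catom set" where
  "Jfun A a n = {CDiv x i | x i. x \<in> diversity_atoms A \<and> leq A x a \<and> n \<le> i}
                \<union> (if leq A (rid A) a then {CId} else {})"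

end

theory Submission imports Defs begin

fun at_of :: "('a, 'm) ra_scheme \<Rightarrow> 'a catom \<Rightarrow> 'a" where
  "at_of A CId = rid A"
| "at_of A (CDiv x i) = x"

lemma restr_simps[simp]: "rcar (restr R S) = S" "rjoin (restr R S) = rjoin R" "rmeet (restr R S) = rmeet R"
  "rcompl (restr R S) = rcompl R" "rzero (restr R S) = rzero R" "rone (restr R S) = rone R"
  "rid (restr R S) = rid R" "rconv (restr R S) = rconv R" "rcomp (restr R S) = rcomp R"
  by (simp_all add: restr_def)

lemma restr_pt[simp]: "rconv (restr R S) X = rconv R X" "rcomp (restr R S) X Y = rcomp R X Y"
  "rjoin (restr R S) X Y = rjoin R X Y" "rmeet (restr R S) X Y = rmeet R X Y" "rcompl (restr R S) X = rcompl R X"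
  by (simp_all add: restr_def)

lemma leq_restr[simp]: "leq (restr R S) = leq R" by (simp add: leq_def fun_eq_iff)

lemma restr_restr[simp]: "restr (restr R S) T = restr R T" by (simp add: restr_def)

lemma subalg_restr: "T \<subseteq> rcar R \<Longrightarrow> subalg S (restr R T) \<longleftrightarrow> S \<subseteq> T \<and> subalg S R"
  unfolding subalg_def by auto

lemma Sg_ub: "X \<subseteq> Sg R X" unfolding Sg_def by auto
lemma Sg_greatest: "(\<And>S. subalg S R \<Longrightarrow> X \<subseteq> S \<Longrightarrow> T \<subseteq> S) \<Longrightarrow> T \<subseteq> Sg R X"
  unfolding Sg_def by auto
lemma Sg_least: "subalg S R \<Longrightarrow> X \<subseteq> S \<Longrightarrow> Sg R X \<subseteq> S" unfolding Sg_def by auto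
lemma Sg_subalg: assumes "subalg (rcar R) R" "X \<subseteq> rcar R" shows "subalg (Sg R X) R"
  using assms unfolding Sg_def subalg_def by (auto simp: Inter_eq)

lemma atoms_pow: assumes "rjoin R = (\<union>)" "rzero R = {}" "rcar R \<subseteq> Pow U" "\<forall>u\<in>U. {u} \<in> rcar R"
  shows "atoms R = (\<lambda>u. {u}) ` U"
proof (intro set_eqI iffI)
  fix a assume a: "a \<in> atoms R"
  hence a1: "a \<in> rcar R" "a \<noteq> {}" "\<forall>x\<in>rcar R. x \<union> a = a \<longrightarrow> x = {} \<or> x = a"
    using assms unfolding atoms_def leq_def by auto
  obtain u where u: "u \<in> a" using a1 by auto
  have uU: "u \<in> U" using u a1 assms by auto
  have "{u} = a" using a1(3) assms(4) uU u by auto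
  thus "a \<in> (\<lambda>u. {u}) ` U" using uU by auto
next
  fix a assume "a \<in> (\<lambda>u. {u}) ` U"
  then obtain u where u: "u \<in> U" "a = {u}" by auto
  show "a \<in> atoms R" unfolding atoms_def leq_def using assms u by auto
qed

lemma Trel_sym: "Trel i j k \<Longrightarrow> Trel j i k" "Trel i j k \<Longrightarrow> Trel i k j"
  unfolding Trel_def by auto

lemma Ctri_sym: "Ctri E A u v w \<Longrightarrow> Ctri E A v u w" "Ctri E A u v w \<Longrightarrow> Ctri E A u w v"
  unfolding Ctri_def by auto

locale SE =
  fixes A :: "'a ra" and E :: "'a set"
  assumes RA: "is_RA A" and fin: "finite (rcar A)" and sym: "symmetric A" and int: "integral A"
    and sub: "subalg E A" and finE: "finite E"
    and spec: "special_extension E A"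
begin

abbreviation car where "car \<equiv> rcar A"
abbreviation jn where "jn \<equiv> rjoin A"
abbreviation mt where "mt \<equiv> rmeet A"
abbreviation cp where "cp \<equiv> rcompl A"
abbreviation ZZ where "ZZ \<equiv> rzero A"
abbreviation TT where "TT \<equiv> rone A"
abbreviation II where "II \<equiv> rid A"
abbreviation cm where "cm \<equiv> rcomp A"
abbreviation le where "le \<equiv> leq A"

lemma BA: "is_BA A" using RA unfolding is_RA_def is_NA_def by auto
lemma NA: "is_NA A" using RA unfolding is_RA_def by auto

lemma Z_car[simp]: "ZZ \<in> car" and O_car[simp]: "TT \<in> car"
  and j_car[simp]: "x \<in> car \<Longrightarrow> y \<in> car \<Longrightarrow> jn x y \<in> car"
  and m_car[simp]: "x \<in> car \<Longrightarrow> y \<in> car \<Longrightarrow> mt x y \<in> car"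
  and cp_car[simp]: "x \<in> car \<Longrightarrow> cp x \<in> car"
  and j_comm: "x \<in> car \<Longrightarrow> y \<in> car \<Longrightarrow> jn x y = jn y x"
  and m_comm: "x \<in> car \<Longrightarrow> y \<in> car \<Longrightarrow> mt x y = mt y x"
  and j_assoc: "x \<in> car \<Longrightarrow> y \<in> car \<Longrightarrow> z \<in> car \<Longrightarrow> jn (jn x y) z = jn x (jn y z)"
  and m_assoc: "x \<in> car \<Longrightarrow> y \<in> car \<Longrightarrow> z \<in> car \<Longrightarrow> mt (mt x y) z = mt x (mt y z)"
  and distr: "x \<in> car \<Longrightarrow> y \<in> car \<Longrightarrow> z \<in> car \<Longrightarrow> mt x (jn y z) = jn (mt x y) (mt x z)"
  and abs1: "x \<in> car \<Longrightarrow> y \<in> car \<Longrightarrow> jn x (mt x y) = x"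
  and abs2: "x \<in> car \<Longrightarrow> y \<in> car \<Longrightarrow> mt x (jn x y) = x"
  and compl1: "x \<in> car \<Longrightarrow> jn x (cp x) = TT"
  and compl2: "x \<in> car \<Longrightarrow> mt x (cp x) = ZZ"
  using BA unfolding is_BA_def by auto

lemma I_car[simp]: "II \<in> car"
  and cv_car[simp]: "x \<in> car \<Longrightarrow> rconv A x \<in> car"
  and cm_car[simp]: "x \<in> car \<Longrightarrow> y \<in> car \<Longrightarrow> cm x y \<in> car"
  and cm_jn: "x \<in> car \<Longrightarrow> y \<in> car \<Longrightarrow> z \<in> car \<Longrightarrow> cm (jn x y) z = jn (cm x z) (cm y z)"
  and cm_I: "x \<in> car \<Longrightarrow> cm x II = x"
  and cv_cm: "x \<in> car \<Longrightarrow> y \<in> car \<Longrightarrow> rconv A (cm x y) = cm (rconv A y) (rconv A x)"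
  and peirce0: "x \<in> car \<Longrightarrow> y \<in> car \<Longrightarrow> jn (cm (rconv A x) (cp (cm x y))) (cp y) = cp y"
  using NA unfolding is_NA_def by auto

lemma cv[simp]: "x \<in> car \<Longrightarrow> rconv A x = x" using sym unfolding symmetric_def by auto

lemma cm_comm: "x \<in> car \<Longrightarrow> y \<in> car \<Longrightarrow> cm x y = cm y x"
  using cv_cm[of x y] by simp

lemma j_idem: "x \<in> car \<Longrightarrow> jn x x = x"
  by (metis abs1 abs2 m_car j_car)
lemma m_idem: "x \<in> car \<Longrightarrow> mt x x = x"
  by (metis abs1 abs2 m_car j_car)

lemma le_meet: "x \<in> car \<Longrightarrow> y \<in> car \<Longrightarrow> le x y \<longleftrightarrow> mt x y = x"
  unfolding leq_def by (metis abs1 abs2 j_comm m_comm)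

lemma lrefl: "x \<in> car \<Longrightarrow> le x x" unfolding leq_def by (simp add: j_idem)
lemma lantisym: "x \<in> car \<Longrightarrow> y \<in> car \<Longrightarrow> le x y \<Longrightarrow> le y x \<Longrightarrow> x = y"
  unfolding leq_def by (metis j_comm)
lemma ltrans: "x \<in> car \<Longrightarrow> y \<in> car \<Longrightarrow> z \<in> car \<Longrightarrow> le x y \<Longrightarrow> le y z \<Longrightarrow> le x z"
  unfolding leq_def by (metis j_assoc)
lemma le_jn1: "x \<in> car \<Longrightarrow> y \<in> car \<Longrightarrow> le x (jn x y)"
  unfolding leq_def by (metis j_assoc j_idem)
lemma le_jn2: "x \<in> car \<Longrightarrow> y \<in> car \<Longrightarrow> le y (jn x y)"
  by (metis le_jn1 j_comm)
lemma jn_le: "x \<in> car \<Longrightarrow> y \<in> car \<Longrightarrow> z \<in> car \<Longrightarrow> le x z \<Longrightarrow> le y z \<Longrightarrow> le (jn x y) z"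
  unfolding leq_def by (metis j_assoc)
lemma mt_le1: "x \<in> car \<Longrightarrow> y \<in> car \<Longrightarrow> le (mt x y) x"
  by (metis le_meet m_assoc m_comm m_idem m_car)
lemma mt_le2: "x \<in> car \<Longrightarrow> y \<in> car \<Longrightarrow> le (mt x y) y"
  by (metis mt_le1 m_comm)
lemma le_mt: "x \<in> car \<Longrightarrow> y \<in> car \<Longrightarrow> z \<in> car \<Longrightarrow> le z x \<Longrightarrow> le z y \<Longrightarrow> le z (mt x y)"
  by (metis le_meet m_assoc m_car)
lemma Z_le: "x \<in> car \<Longrightarrow> le ZZ x"
  by (metis compl2 cp_car mt_le1)
lemma le_O: "x \<in> car \<Longrightarrow> le x TT"
  by (metis compl1 cp_car le_jn1)
lemma mt_Z: "x \<in> car \<Longrightarrow> mt x ZZ = ZZ"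
  by (metis Z_le le_meet m_comm Z_car)
lemma jn_Z: "x \<in> car \<Longrightarrow> jn x ZZ = x"
  by (metis Z_le leq_def j_comm Z_car)
lemma mt_O: "x \<in> car \<Longrightarrow> mt x TT = x"
  by (metis le_O le_meet O_car)
lemma le_Z: "x \<in> car \<Longrightarrow> le x ZZ \<Longrightarrow> x = ZZ"
  by (metis Z_le lantisym Z_car)

lemma le_cp_iff: "x \<in> car \<Longrightarrow> y \<in> car \<Longrightarrow> le x (cp y) \<longleftrightarrow> mt x y = ZZ"
proof
  assume xy: "x \<in> car" "y \<in> car" and "le x (cp y)"
  hence "mt x (cp y) = x" by (simp add: le_meet)
  hence "mt x y = mt x (mt (cp y) y)" using xy by (metis m_assoc cp_car m_comm)
  also have "\<dots> = ZZ" using xy by (metis compl2 m_comm cp_car mt_Z)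
  finally show "mt x y = ZZ" .
next
  assume xy: "x \<in> car" "y \<in> car" and h: "mt x y = ZZ"
  have "x = mt x (jn y (cp y))" using xy by (simp add: compl1 mt_O)
  also have "\<dots> = jn ZZ (mt x (cp y))" using xy h by (simp add: distr)
  also have "\<dots> = mt x (cp y)" using xy by (metis jn_Z j_comm m_car cp_car Z_car)
  finally show "le x (cp y)" using xy by (metis le_meet cp_car)
qed

lemma not_le_mt: "a \<in> car \<Longrightarrow> b \<in> car \<Longrightarrow> \<not> le a b \<Longrightarrow> mt a (cp b) \<noteq> ZZ"
proof
  assume ab: "a \<in> car" "b \<in> car" "\<not> le a b" and h: "mt a (cp b) = ZZ"
  have "a = mt a (jn b (cp b))" using ab by (simp add: compl1 mt_O)
  also have "\<dots> = mt a b" using ab h by (simp add: distr jn_Z)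
  finally show False using ab by (metis le_meet)
qed


lemma atom_car: "z \<in> atoms A \<Longrightarrow> z \<in> car" and atom_nz: "z \<in> atoms A \<Longrightarrow> z \<noteq> ZZ"
  unfolding atoms_def by auto

lemma atom_le_or: "z \<in> atoms A \<Longrightarrow> w \<in> car \<Longrightarrow> le z w \<or> mt z w = ZZ"
proof -
  assume z: "z \<in> atoms A" and w: "w \<in> car"
  have zc: "z \<in> car" using z atom_car by auto
  have "le (mt z w) z" using zc w by (simp add: mt_le1)
  hence "mt z w = ZZ \<or> mt z w = z" using z w zc unfolding atoms_def by auto
  thus ?thesis using zc w le_meet by auto
qed

lemma atom_mt_nz: "z \<in> atoms A \<Longrightarrow> w \<in> car \<Longrightarrow> mt z w \<noteq> ZZ \<longleftrightarrow> le z w"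
  by (metis atom_le_or atom_car atom_nz le_meet)

lemma atom_jn: "z \<in> atoms A \<Longrightarrow> x \<in> car \<Longrightarrow> y \<in> car \<Longrightarrow> le z (jn x y) \<longleftrightarrow> le z x \<or> le z y"
proof
  assume z: "z \<in> atoms A" and xy: "x \<in> car" "y \<in> car" and h: "le z (jn x y)"
  have zc: "z \<in> car" using z atom_car by auto
  show "le z x \<or> le z y"
  proof (rule ccontr)
    assume "\<not> (le z x \<or> le z y)"
    hence "mt z x = ZZ" "mt z y = ZZ" using atom_le_or z xy by auto
    hence "mt z (jn x y) = ZZ" using zc xy by (simp add: distr j_idem)
    moreover have "mt z (jn x y) = z" using h zc xy le_meet by auto
    ultimately show False using atom_nz z by auto
  qed
next
  assume z: "z \<in> atoms A" and xy: "x \<in> car" "y \<in> car" and h: "le z x \<or> le z y"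
  have zc: "z \<in> car" using z atom_car by auto
  show "le z (jn x y)"
  proof (cases "le z x")
    case True thus ?thesis using ltrans[of z x "jn x y"] le_jn1 xy zc by auto
  next
    case False thus ?thesis using h ltrans[of z y "jn x y"] le_jn2 xy zc by auto
  qed
qed

lemma atom_cp: "z \<in> atoms A \<Longrightarrow> w \<in> car \<Longrightarrow> le z (cp w) \<longleftrightarrow> \<not> le z w"
  by (metis atom_mt_nz atom_car le_cp_iff)

lemma atom_le_atom: "z \<in> atoms A \<Longrightarrow> y \<in> atoms A \<Longrightarrow> le z y \<Longrightarrow> z = y"
  unfolding atoms_def by auto

lemma min_ex: assumes S: "S \<subseteq> car" "S \<noteq> {}" shows "\<exists>e\<in>S. \<forall>e'\<in>S. le e' e \<longrightarrow> e' = e"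
proof -
  define f where "f e = card {w\<in>car. le w e}" for e
  have fS: "finite (f ` S)" using S fin by (meson finite_imageI finite_subset)
  have "Min (f ` S) \<in> f ` S" using Min_in[OF fS] S by auto
  then obtain e where e: "e \<in> S" "f e = Min (f ` S)" by (metis imageE)
  show ?thesis
  proof (intro bexI[OF _ e(1)] ballI impI)
    fix e' assume e': "e' \<in> S" "le e' e"
    show "e' = e"
    proof (rule ccontr)
      assume ne: "e' \<noteq> e"
      have ec: "e \<in> car" "e' \<in> car" using e' e S by auto
      have "{w\<in>car. le w e'} \<subset> {w\<in>car. le w e}"
      proof
        show "{w\<in>car. le w e'} \<subseteq> {w\<in>car. le w e}" using ltrans ec e' by blast
        have "e \<notin> {w\<in>car. le w e'}" using lantisym ec e' ne by auto
        moreover have "e \<in> {w\<in>car. le w e}" using ec lrefl by auto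
        ultimately show "{w\<in>car. le w e'} \<noteq> {w\<in>car. le w e}" by blast
      qed
      hence "f e' < f e" unfolding f_def using fin by (simp add: psubset_card_mono)
      moreover have "f e \<le> f e'" using e Min_le[OF fS] e' by auto
      ultimately show False by simp
    qed
  qed
qed

lemma atomic_A: assumes x: "x \<in> car" "x \<noteq> ZZ" shows "\<exists>z\<in>atoms A. le z x"
proof -
  obtain e where e: "e \<in> {w\<in>car. w \<noteq> ZZ \<and> le w x}"
    and m: "\<forall>e'\<in>{w\<in>car. w \<noteq> ZZ \<and> le w x}. le e' e \<longrightarrow> e' = e"
    using min_ex[of "{w\<in>car. w \<noteq> ZZ \<and> le w x}"] x lrefl by blast
  have "\<forall>y\<in>car. le y e \<longrightarrow> y = ZZ \<or> y = e"
  proof (intro ballI impI)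
    fix y assume y: "y \<in> car" "le y e"
    show "y = ZZ \<or> y = e"
    proof (cases "y = ZZ")
      case False
      have "le y x" using ltrans[of y e x] y e x by auto
      thus ?thesis using m y False by auto
    qed simp
  qed
  hence "e \<in> atoms A" using e unfolding atoms_def by auto
  thus ?thesis using e by auto
qed

lemma cm_jn2: "x \<in> car \<Longrightarrow> y \<in> car \<Longrightarrow> z \<in> car \<Longrightarrow> cm z (jn x y) = jn (cm z x) (cm z y)"
proof -
  assume c: "x \<in> car" "y \<in> car" "z \<in> car"
  have "cm z (jn x y) = cm (jn x y) z" using c cm_comm[of z "jn x y"] by simp
  also have "\<dots> = jn (cm x z) (cm y z)" using c cm_jn by simp
  finally show ?thesis using c cm_comm[of z x] cm_comm[of z y] by simp
qed

lemma cm_mono1: assumes "x \<in> car" "x' \<in> car" "y \<in> car" "le x x'" shows "le (cm x y) (cm x' y)"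
proof -
  have "cm x' y = jn (cm x y) (cm x' y)" using assms cm_jn unfolding leq_def by metis
  thus ?thesis using assms by (metis le_jn1 cm_car)
qed

lemma cm_mono: assumes "x \<in> car" "x' \<in> car" "y \<in> car" "y' \<in> car" "le x x'" "le y y'"
  shows "le (cm x y) (cm x' y')"
proof -
  have "le (cm x y) (cm x' y)" using assms cm_mono1 by auto
  moreover have "le (cm x' y) (cm x' y')" using assms cm_mono1[of y y' x'] cm_comm[of x' y] cm_comm[of x' y'] by auto
  ultimately show ?thesis using assms ltrans[of "cm x y" "cm x' y" "cm x' y'"] by auto
qed

lemma peirce: "x \<in> car \<Longrightarrow> y \<in> car \<Longrightarrow> le (cm x (cp (cm x y))) (cp y)"
  using peirce0 unfolding leq_def by simp

lemma cycle: assumes "a \<in> car" "b \<in> car" "c \<in> car" "mt (cm a c) b = ZZ" shows "mt (cm a b) c = ZZ"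
proof -
  have "le b (cp (cm a c))" using assms le_cp_iff m_comm by (metis cm_car)
  hence "le (cm a b) (cm a (cp (cm a c)))" using assms cm_mono[of a a b] lrefl by simp
  hence "le (cm a b) (cp c)" using assms peirce[of a c] ltrans[of "cm a b" "cm a (cp (cm a c))" "cp c"] by auto
  thus ?thesis using assms le_cp_iff by simp
qed

lemma I_cm: "x \<in> car \<Longrightarrow> cm II x = x" by (metis cm_I cm_comm I_car)

lemma I_atom: "II \<in> atoms A" using int unfolding integral_def by auto

lemma div_def': "diversity_atoms A = {a\<in>atoms A. le a (cp II)}" unfolding diversity_atoms_def ..

lemma atom_cases: "z \<in> atoms A \<Longrightarrow> z = II \<or> z \<in> diversity_atoms A"
  unfolding div_def' by (metis (mono_tags, lifting) I_atom I_car atom_cp atom_le_atom mem_Collect_eq)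

lemma div_atom: "z \<in> diversity_atoms A \<Longrightarrow> z \<in> atoms A \<and> z \<noteq> II"
  unfolding div_def' using atom_cp I_atom I_car lrefl by auto

lemma div_car: "z \<in> diversity_atoms A \<Longrightarrow> z \<in> car" using div_atom atom_car by auto

lemma tri_perm: assumes "x \<in> atoms A" "y \<in> atoms A" "z \<in> atoms A" "le z (cm x y)"
  shows "le y (cm x z)"
proof -
  have c: "x \<in> car" "y \<in> car" "z \<in> car" using assms atom_car by auto
  have "mt z (cm x y) \<noteq> ZZ" using assms atom_mt_nz c by auto
  hence "mt (cm x y) z \<noteq> ZZ" using c m_comm by auto
  hence "mt (cm x z) y \<noteq> ZZ" using cycle c by auto
  hence "mt y (cm x z) \<noteq> ZZ" using c m_comm by auto
  thus ?thesis using atom_mt_nz assms c by auto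
qed

lemma tri_perm2: assumes "x \<in> atoms A" "y \<in> atoms A" "z \<in> atoms A" "le z (cm x y)"
  shows "le z (cm y x)" using assms atom_car cm_comm[of x y] by metis

lemma decomp: assumes z: "z \<in> atoms A" and ab: "a \<in> car" "b \<in> car" and h: "le z (cm a b)"
  shows "\<exists>x\<in>atoms A. \<exists>y\<in>atoms A. le x a \<and> le y b \<and> le z (cm x y)"
proof -
  have zc: "z \<in> car" using z atom_car by auto
  have "mt z (cm b a) \<noteq> ZZ" using h z ab atom_mt_nz cm_comm[of a b] by auto
  hence "mt (cm b a) z \<noteq> ZZ" using zc ab m_comm by auto
  hence "mt (cm b z) a \<noteq> ZZ" using cycle zc ab by auto
  then obtain x where x: "x \<in> atoms A" "le x (mt (cm b z) a)" using atomic_A[of "mt (cm b z) a"] zc ab by auto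
  have xc: "x \<in> car" using x atom_car by auto
  have xa: "le x a" "le x (cm b z)"
    using x ltrans[of x "mt (cm b z) a" a] ltrans[of x "mt (cm b z) a" "cm b z"]
      mt_le1[of "cm b z" a] mt_le2[of "cm b z" a] zc ab xc by auto
  have "mt x (cm b z) \<noteq> ZZ" using xa x atom_mt_nz zc ab by auto
  hence "mt (cm b z) x \<noteq> ZZ" using zc ab xc m_comm by auto
  hence "mt (cm b x) z \<noteq> ZZ" using cycle zc ab xc by auto
  hence "mt z (cm x b) \<noteq> ZZ" using zc ab xc m_comm cm_comm[of x b] by auto
  hence "mt (cm x b) z \<noteq> ZZ" using zc ab xc m_comm by auto
  hence "mt (cm x z) b \<noteq> ZZ" using cycle zc ab xc by auto
  then obtain y where y: "y \<in> atoms A" "le y (mt (cm x z) b)" using atomic_A[of "mt (cm x z) b"] zc ab xc by auto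
  have yc: "y \<in> car" using y atom_car by auto
  have yb: "le y b" "le y (cm x z)"
    using y ltrans[of y "mt (cm x z) b" b] ltrans[of y "mt (cm x z) b" "cm x z"]
      mt_le1[of "cm x z" b] mt_le2[of "cm x z" b] zc ab xc yc by auto
  have "le z (cm x y)" using tri_perm[OF x(1) z y(1) yb(2)] .
  thus ?thesis using x y xa yb by auto
qed


lemma E_sub: "E \<subseteq> car" and E_Z: "ZZ \<in> E" and E_T: "TT \<in> E" and E_I: "II \<in> E"
  and E_cp: "x \<in> E \<Longrightarrow> cp x \<in> E"
  and E_jn: "x \<in> E \<Longrightarrow> y \<in> E \<Longrightarrow> jn x y \<in> E"
  and E_mt: "x \<in> E \<Longrightarrow> y \<in> E \<Longrightarrow> mt x y \<in> E"
  and E_cm: "x \<in> E \<Longrightarrow> y \<in> E \<Longrightarrow> cm x y \<in> E"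
  and E_cv: "x \<in> E \<Longrightarrow> rconv A x \<in> E"
  using sub unfolding subalg_def by auto

lemma E_car: "x \<in> E \<Longrightarrow> x \<in> car" using E_sub by auto

lemma atomsE: "atoms (restr A E) = {a\<in>E. a \<noteq> ZZ \<and> (\<forall>x\<in>E. le x a \<longrightarrow> x = ZZ \<or> x = a)}"
  unfolding atoms_def restr_def leq_def by simp

lemma divE: "diversity_atoms (restr A E) = {a\<in>atoms (restr A E). le a (cp II)}"
  unfolding diversity_atoms_def restr_def leq_def by simp

lemma Eatom_above: assumes a: "a \<in> atoms (restr A E)" and w: "w \<in> E" and z: "z \<in> atoms A"
  and za: "le z a" and zw: "le z w" shows "le a w"
proof -
  have ac: "a \<in> E" "a \<in> car" using a atomsE E_car by auto
  have wc: "w \<in> car" using w E_car by auto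
  have zc: "z \<in> car" using z atom_car by auto
  have mE: "mt a w \<in> E" using E_mt ac w by auto
  have "le z (mt a w)" using le_mt ac wc zc za zw by auto
  hence "mt a w \<noteq> ZZ" using le_Z[OF zc] atom_nz[OF z] by auto
  moreover have "le (mt a w) a" using mt_le1 ac wc by auto
  ultimately have "mt a w = a" using a mE unfolding atomsE by auto
  thus ?thesis using le_meet ac wc by auto
qed

lemma cE_ex: assumes z: "z \<in> atoms A" shows "\<exists>e\<in>atoms (restr A E). le z e"
proof -
  have zc: "z \<in> car" using z atom_car by auto
  obtain e where e: "e \<in> {w\<in>E. le z w}" and m: "\<forall>e'\<in>{w\<in>E. le z w}. le e' e \<longrightarrow> e' = e"
    using min_ex[of "{w\<in>E. le z w}"] E_sub E_T le_O zc by blast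
  have ec: "e \<in> car" using e E_car by auto
  have "e \<noteq> ZZ" using e le_Z[OF zc] atom_nz[OF z] by auto
  moreover have "\<forall>y\<in>E. le y e \<longrightarrow> y = ZZ \<or> y = e"
  proof (intro ballI impI)
    fix y assume y: "y \<in> E" "le y e"
    have yc: "y \<in> car" using y E_car by auto
    show "y = ZZ \<or> y = e"
    proof (cases "le z y")
      case True thus ?thesis using m y by auto
    next
      case False
      hence "le z (cp y)" using atom_cp z yc by auto
      hence "le z (mt e (cp y))" using le_mt ec yc zc e by auto
      moreover have "mt e (cp y) \<in> E" using E_mt E_cp y e by auto
      moreover have "le (mt e (cp y)) e" using mt_le1 ec yc by auto
      ultimately have "mt e (cp y) = e" using m by auto
      hence "le e (cp y)" using le_meet ec yc by (metis cp_car)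
      hence "le y (cp y)" using ltrans[of y e "cp y"] y ec yc by auto
      hence "mt y y = ZZ" using le_cp_iff yc by auto
      thus ?thesis using m_idem yc by auto
    qed
  qed
  ultimately have "e \<in> atoms (restr A E)" using e unfolding atomsE by auto
  thus ?thesis using e by auto
qed

lemma cE_uniq: assumes "z \<in> atoms A" "e \<in> atoms (restr A E)" "e' \<in> atoms (restr A E)"
  "le z e" "le z e'" shows "e = e'"
proof -
  have "e \<in> E" "e' \<in> E" using assms atomsE by auto
  hence "le e e'" "le e' e" using Eatom_above assms by auto
  thus ?thesis using lantisym \<open>e \<in> E\<close> \<open>e' \<in> E\<close> E_car by auto
qed

lemma cE_prop: assumes "z \<in> atoms A" shows "cE E A z \<in> atoms (restr A E) \<and> le z (cE E A z)"
proof -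
  have "\<exists>!e. e \<in> atoms (restr A E) \<and> le z e" using cE_ex cE_uniq assms by blast
  thus ?thesis unfolding cE_def by (rule theI')
qed

lemma cE_eq: "z \<in> atoms A \<Longrightarrow> e \<in> atoms (restr A E) \<Longrightarrow> le z e \<Longrightarrow> cE E A z = e"
  using cE_prop cE_uniq by blast

lemma cE_div: assumes z: "z \<in> diversity_atoms A" shows "cE E A z \<in> diversity_atoms (restr A E)"
proof -
  have za: "z \<in> atoms A" using z div_atom by auto
  have "le z (cp II)" using z div_def' by auto
  hence "le (cE E A z) (cp II)" using Eatom_above[of "cE E A z" "cp II" z] cE_prop[OF za] E_cp E_I za by auto
  thus ?thesis using divE cE_prop[OF za] by auto
qed


lemma CAt_CId[simp]: "CId \<in> CAt A" and CAt_CDiv[simp]: "CDiv x i \<in> CAt A \<longleftrightarrow> x \<in> diversity_atoms A"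
  unfolding CAt_def by auto

lemma at_of_atom: "u \<in> CAt A \<Longrightarrow> at_of A u \<in> atoms A"
  by (cases u) (auto simp: I_atom div_atom)

lemma at_of_car: "u \<in> CAt A \<Longrightarrow> at_of A u \<in> car"
  using at_of_atom atom_car by auto

lemma Cbase_tri: "Cbase E A p q r \<Longrightarrow> p \<in> CAt A \<and> q \<in> CAt A \<and> r \<in> CAt A \<and>
   le (at_of A r) (cm (at_of A p) (at_of A q))"
proof (cases p; cases q; cases r)
qed (auto simp: lrefl I_cm div_car)

lemma Ctri_tri: assumes "Ctri E A u v w"
  shows "u \<in> CAt A \<and> v \<in> CAt A \<and> w \<in> CAt A \<and> le (at_of A w) (cm (at_of A u) (at_of A v))"
proof -
  have P: "le z (cm y x)" if "x \<in> atoms A" "y \<in> atoms A" "z \<in> atoms A" "le z (cm x y)" for x y z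
    using tri_perm2 that by auto
  have Q: "le y (cm x z)" if "x \<in> atoms A" "y \<in> atoms A" "z \<in> atoms A" "le z (cm x y)" for x y z
    using tri_perm that by auto
  from assms[unfolded Ctri_def] show ?thesis
  proof (elim disjE)
    assume "Cbase E A u v w" thus ?thesis using Cbase_tri by auto
  next
    assume "Cbase E A u w v" thus ?thesis using Cbase_tri[of u w v] Q at_of_atom by blast
  next
    assume "Cbase E A v u w" thus ?thesis using Cbase_tri[of v u w] P at_of_atom by blast
  next
    assume h: "Cbase E A v w u"
    hence "le (at_of A w) (cm (at_of A v) (at_of A u))" using Cbase_tri[of v w u] Q at_of_atom by blast
    thus ?thesis using h Cbase_tri[of v w u] P at_of_atom by blast
  next
    assume h: "Cbase E A w u v"
    hence "le (at_of A v) (cm (at_of A u) (at_of A w))" using Cbase_tri[of w u v] P at_of_atom by blast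
    thus ?thesis using h Cbase_tri[of w u v] Q at_of_atom by blast
  next
    assume h: "Cbase E A w v u"
    hence "le (at_of A u) (cm (at_of A v) (at_of A w))" using Cbase_tri[of w v u] P at_of_atom by blast
    hence "le (at_of A w) (cm (at_of A v) (at_of A u))" using h Cbase_tri[of w v u] Q at_of_atom by blast
    thus ?thesis using h Cbase_tri[of w v u] P at_of_atom by blast
  qed
qed

lemma Ctri_CId: "Ctri E A CId v w \<longleftrightarrow> v = w \<and> v \<in> CAt A"
  by (cases v; cases w) (auto simp: Ctri_def)

lemma Ctri_CId2: "Ctri E A u CId w \<longleftrightarrow> u = w \<and> u \<in> CAt A"
  using Ctri_CId Ctri_sym by metis

lemma Ctri_ddd: "Ctri E A (CDiv x i) (CDiv y j) (CDiv z k) \<longleftrightarrow>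
   x \<in> diversity_atoms A \<and> y \<in> diversity_atoms A \<and> z \<in> diversity_atoms A \<and> le z (cm x y) \<and>
   (cE E A x = cE E A y \<and> cE E A y = cE E A z \<longrightarrow> Trel i j k)"
proof
  assume h: "Ctri E A (CDiv x i) (CDiv y j) (CDiv z k)"
  have "le z (cm x y)" using Ctri_tri[OF h] by simp
  moreover have "x \<in> diversity_atoms A \<and> y \<in> diversity_atoms A \<and> z \<in> diversity_atoms A"
    using Ctri_tri[OF h] by simp
  moreover have "cE E A x = cE E A y \<and> cE E A y = cE E A z \<longrightarrow> Trel i j k"
    using h unfolding Ctri_def by (auto simp: Trel_def)
  ultimately show "x \<in> diversity_atoms A \<and> y \<in> diversity_atoms A \<and> z \<in> diversity_atoms A \<and> le z (cm x y) \<and>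
   (cE E A x = cE E A y \<and> cE E A y = cE E A z \<longrightarrow> Trel i j k)" by blast
next
  assume "x \<in> diversity_atoms A \<and> y \<in> diversity_atoms A \<and> z \<in> diversity_atoms A \<and> le z (cm x y) \<and>
   (cE E A x = cE E A y \<and> cE E A y = cE E A z \<longrightarrow> Trel i j k)"
  thus "Ctri E A (CDiv x i) (CDiv y j) (CDiv z k)" unfolding Ctri_def by simp
qed

lemma Ctri_ddI: "x \<in> diversity_atoms A \<Longrightarrow> Ctri E A (CDiv x i) (CDiv x i) CId"
  unfolding Ctri_def by simp


abbreviation J where "J a \<equiv> Jfun A a 0"
abbreviation Cc where "Cc X Y \<equiv> {w. \<exists>u\<in>X. \<exists>v\<in>Y. Ctri E A u v w}"

lemma J_CId: "CId \<in> J a \<longleftrightarrow> le II a" unfolding Jfun_def by auto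
lemma J_CDiv: "CDiv x i \<in> J a \<longleftrightarrow> x \<in> diversity_atoms A \<and> le x a" unfolding Jfun_def by auto
lemma J_sub: "J a \<subseteq> CAt A" unfolding Jfun_def CAt_def by auto
lemma J_mem: "u \<in> CAt A \<Longrightarrow> u \<in> J a \<longleftrightarrow> le (at_of A u) a"
  by (cases u) (auto simp: J_CId J_CDiv)

lemma ex_u: "z \<in> atoms A \<Longrightarrow> \<exists>u\<in>CAt A. at_of A u = z"
proof -
  assume z: "z \<in> atoms A"
  show ?thesis
  proof (cases "z = II")
    case True thus ?thesis by (intro bexI[of _ CId]) auto
  next
    case False
    hence "z \<in> diversity_atoms A" using atom_cases z by auto
    thus ?thesis by (intro bexI[of _ "CDiv z 0"]) auto
  qed
qed

lemma J_inj: assumes ab: "a \<in> car" "b \<in> car" and eq: "J a = J b" shows "a = b"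
proof (rule ccontr)
  assume ne: "a \<noteq> b"
  have "\<exists>a' b'. a' \<in> car \<and> b' \<in> car \<and> J a' = J b' \<and> \<not> le a' b'"
    using lantisym ab eq ne by metis
  then obtain a' b' where h: "a' \<in> car" "b' \<in> car" "J a' = J b'" "\<not> le a' b'" by blast
  have "mt a' (cp b') \<noteq> ZZ" using not_le_mt h by auto
  then obtain z where z: "z \<in> atoms A" "le z (mt a' (cp b'))" using atomic_A[of "mt a' (cp b')"] h by auto
  have zc: "z \<in> car" using z atom_car by auto
  have "le z a'" "le z (cp b')" using z ltrans[of z "mt a' (cp b')" a'] ltrans[of z "mt a' (cp b')" "cp b'"]
      mt_le1[of a' "cp b'"] mt_le2[of a' "cp b'"] h zc by auto
  hence "le z a'" "\<not> le z b'" using atom_cp z h by auto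
  moreover obtain u where "u \<in> CAt A" "at_of A u = z" using ex_u z by auto
  ultimately show False using J_mem h by metis
qed

lemma J_Z: "J ZZ = {}"
proof -
  have "u \<notin> J ZZ" for u
  proof
    assume u: "u \<in> J ZZ"
    hence uc: "u \<in> CAt A" using J_sub by auto
    hence "le (at_of A u) ZZ" using J_mem u by auto
    thus False using le_Z at_of_car uc at_of_atom atom_nz by metis
  qed
  thus ?thesis by auto
qed

lemma J_T: "J TT = CAt A"
  using J_sub J_mem le_O at_of_car by blast

lemma J_I: "J II = {CId}"
proof -
  have "u \<in> J II \<longleftrightarrow> u = CId" for u
  proof (cases u)
    case CId thus ?thesis using J_CId lrefl by auto
  next
    case (CDiv x i)
    have "\<not> le x II" if "x \<in> diversity_atoms A"
      using that div_atom atom_le_atom I_atom by blast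
    thus ?thesis using CDiv J_CDiv by auto
  qed
  thus ?thesis by auto
qed

lemma J_cp: "a \<in> car \<Longrightarrow> J (cp a) = CAt A - J a"
  using J_sub J_mem atom_cp at_of_atom by blast

lemma J_jn: "a \<in> car \<Longrightarrow> b \<in> car \<Longrightarrow> J (jn a b) = J a \<union> J b"
  using J_sub J_mem atom_jn at_of_atom by blast

lemma J_mt: assumes "a \<in> car" "b \<in> car" shows "J (mt a b) = J a \<inter> J b"
proof -
  have "u \<in> J (mt a b) \<longleftrightarrow> u \<in> J a \<and> u \<in> J b" if u: "u \<in> CAt A" for u
  proof -
    have "at_of A u \<in> car" using at_of_car u by auto
    thus ?thesis using J_mem u le_mt mt_le1 mt_le2 ltrans assms by (metis m_car)
  qed
  thus ?thesis using J_sub by blast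
qed

lemma J_cv: "a \<in> car \<Longrightarrow> J (rconv A a) = J a" by simp

lemma J_cm: assumes ab: "a \<in> car" "b \<in> car" shows "J (cm a b) = Cc (J a) (J b)"
proof (intro set_eqI iffI)
  fix w assume w: "w \<in> J (cm a b)"
  have wc: "w \<in> CAt A" using w J_sub by auto
  define z where "z = at_of A w"
  have z: "z \<in> atoms A" "le z (cm a b)" using wc w J_mem at_of_atom z_def by auto
  obtain x y where xy: "x \<in> atoms A" "y \<in> atoms A" "le x a" "le y b" "le z (cm x y)"
    using decomp[OF z(1) ab z(2)] by auto
  have xyc: "x \<in> car" "y \<in> car" using xy atom_car by auto
  show "w \<in> Cc (J a) (J b)"
  proof (cases "x = II")
    case True
    hence "z = y" using xy z atom_le_atom I_cm xyc by auto
    hence "CId \<in> J a" "w \<in> J b" using J_CId True xy J_mem wc z_def by auto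
    thus ?thesis using Ctri_CId wc by blast
  next
    case xI: False
    show ?thesis
    proof (cases "y = II")
      case True
      hence "z = x" using xy z atom_le_atom cm_I xyc by auto
      hence "CId \<in> J b" "w \<in> J a" using J_CId True xy J_mem wc z_def by auto
      thus ?thesis using Ctri_CId2 wc by blast
    next
      case yI: False
      have xd: "x \<in> diversity_atoms A" "y \<in> diversity_atoms A" using xI yI atom_cases xy by auto
      show ?thesis
      proof (cases w)
        case CId
        hence "z = II" using z_def by simp
        hence "le y (cm x II)" using tri_perm[OF xy(1) xy(2) I_atom] xy(5) by simp
        hence "y = x" using cm_I xyc atom_le_atom xy by auto
        hence "CDiv x 0 \<in> J a" "CDiv x 0 \<in> J b" using J_CDiv xd xy by auto
        thus ?thesis using Ctri_ddI[OF xd(1)] CId by blast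
      next
        case (CDiv z' k)
        hence zz: "z' = z" "z' \<in> diversity_atoms A" using z_def wc by auto
        have "CDiv x k \<in> J a" "CDiv y k \<in> J b" using J_CDiv xd xy by auto
        moreover have "Ctri E A (CDiv x k) (CDiv y k) w"
          using Ctri_ddd CDiv xd zz xy by (simp add: Trel_def)
        ultimately show ?thesis by blast
      qed
    qed
  qed
next
  fix w assume "w \<in> Cc (J a) (J b)"
  then obtain u v where uv: "u \<in> J a" "v \<in> J b" "Ctri E A u v w" by blast
  have t: "u \<in> CAt A" "v \<in> CAt A" "w \<in> CAt A" "le (at_of A w) (cm (at_of A u) (at_of A v))"
    using Ctri_tri[OF uv(3)] by auto
  have "le (at_of A u) a" "le (at_of A v) b" using J_mem uv t by auto
  hence "le (cm (at_of A u) (at_of A v)) (cm a b)" using cm_mono[of "at_of A u" a "at_of A v" b] at_of_car[OF t(1)] at_of_car[OF t(2)] ab by blast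
  hence "le (at_of A w) (cm a b)" using ltrans[of "at_of A w" "cm (at_of A u) (at_of A v)" "cm a b"] t at_of_car[OF t(1)] at_of_car[OF t(2)] at_of_car[OF t(3)] ab by auto
  thus "w \<in> J (cm a b)" using J_mem t by auto
qed


definition unif :: "nat \<Rightarrow> 'a catom set \<Rightarrow> bool" where
  "unif N X \<longleftrightarrow> X \<subseteq> CAt A \<and> (\<forall>z z' k k'. z \<in> diversity_atoms A \<longrightarrow> z' \<in> diversity_atoms A \<longrightarrow>
      N \<le> k \<longrightarrow> N \<le> k' \<longrightarrow> cE E A z = cE E A z' \<longrightarrow> CDiv z k \<in> X \<longrightarrow> CDiv z' k' \<in> X)"

lemma unifD: assumes "unif N X" "z \<in> diversity_atoms A" "z' \<in> diversity_atoms A"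
      "N \<le> k" "N \<le> k'" "cE E A z = cE E A z'" "CDiv z k \<in> X" shows "CDiv z' k' \<in> X"
  using assms(1)[unfolded unif_def, THEN conjunct2, rule_format, OF assms(2-7)] .

lemma unif_sub: "unif N X \<Longrightarrow> X \<subseteq> CAt A" unfolding unif_def by (rule conjunct1)

lemma unif_mono: assumes "unif N X" "N \<le> M" shows "unif M X"
  unfolding unif_def
proof (intro conjI allI impI)
  show "X \<subseteq> CAt A" using unif_sub assms by blast
  fix z z' k k' assume h: "z \<in> diversity_atoms A" "z' \<in> diversity_atoms A" "M \<le> k" "M \<le> k'"
     "cE E A z = cE E A z'" "CDiv z k \<in> X"
  show "CDiv z' k' \<in> X" using unifD[OF assms(1) h(1,2) _ _ h(5,6)] h(3,4) assms(2) by simp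
qed

lemma unif_empty: "unif N {}" unfolding unif_def by simp
lemma unif_CAt: "unif N (CAt A)" unfolding unif_def by simp
lemma unif_CId: "unif N {CId}" unfolding unif_def by simp
lemma unif_single: assumes "u \<in> CAt A" shows "\<exists>N. unif N {u}"
proof (cases u)
  case CId thus ?thesis using unif_CId by blast
next
  case (CDiv z i)
  have "unif (Suc i) {u}" using CDiv assms unfolding unif_def by simp
  thus ?thesis by blast
qed

lemma unif_cp: assumes "unif N X" shows "unif N (CAt A - X)"
  unfolding unif_def
proof (intro conjI allI impI)
  fix z z' k k' assume h: "z \<in> diversity_atoms A" "z' \<in> diversity_atoms A" "N \<le> k" "N \<le> k'"
     "cE E A z = cE E A z'" "CDiv z k \<in> CAt A - X"
  have "CDiv z' k' \<notin> X"
  proof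
    assume "CDiv z' k' \<in> X"
    hence "CDiv z k \<in> X" using unifD[OF assms h(2) h(1) h(4) h(3)] h(5) by simp
    thus False using h by simp
  qed
  thus "CDiv z' k' \<in> CAt A - X" using h by simp
qed auto
lemma unif_un: "unif N X \<Longrightarrow> unif N Y \<Longrightarrow> unif N (X \<union> Y)"
  unfolding unif_def by blast
lemma unif_int: "unif N X \<Longrightarrow> unif N Y \<Longrightarrow> unif N (X \<inter> Y)"
  unfolding unif_def by blast

lemma unif_comp: assumes X: "unif N X" and Y: "unif N Y" shows "unif N (Cc X Y)"
  unfolding unif_def
proof (intro conjI allI impI)
  show "Cc X Y \<subseteq> CAt A" using Ctri_tri by blast
  fix z z' k k'
  assume zd: "z \<in> diversity_atoms A" and z'd: "z' \<in> diversity_atoms A" and Nk: "N \<le> k" and Nk': "N \<le> k'"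
    and ce: "cE E A z = cE E A z'" and mem: "CDiv z k \<in> Cc X Y"
  then obtain u v where uv: "u \<in> X" "v \<in> Y" "Ctri E A u v (CDiv z k)" by blast
  show "CDiv z' k' \<in> Cc X Y"
  proof (cases u)
    case CId
    hence "v = CDiv z k" using uv Ctri_CId by auto
    hence "CDiv z' k' \<in> Y" using unifD[OF Y zd z'd Nk Nk' ce] uv by auto
    moreover have "Ctri E A CId (CDiv z' k') (CDiv z' k')" using Ctri_CId z'd by simp
    ultimately show ?thesis using uv CId by blast
  next
    case (CDiv x i) note u = this
    show ?thesis
    proof (cases v)
      case CId
      hence "u = CDiv z k" using uv Ctri_CId2 by auto
      hence "CDiv z' k' \<in> X" using unifD[OF X zd z'd Nk Nk' ce] uv by auto
      moreover have "Ctri E A (CDiv z' k') CId (CDiv z' k')" using Ctri_CId2 z'd by simp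
      ultimately show ?thesis using uv CId by blast
    next
      case (CDiv y j) note v = this
      have tr: "x \<in> diversity_atoms A" "y \<in> diversity_atoms A" "le z (cm x y)"
          "cE E A x = cE E A y \<and> cE E A y = cE E A z \<longrightarrow> Trel i j k"
        using Ctri_ddd[THEN iffD1, of x i y j z k] uv(3) u v by auto
      have at: "x \<in> atoms A" "y \<in> atoms A" "z \<in> atoms A" "z' \<in> atoms A"
        using tr zd z'd div_atom by auto
      have ac: "x \<in> car" "y \<in> car" "z \<in> car" "z' \<in> car" using at atom_car by auto
      define a where "a = cE E A z"
      have aE: "a \<in> diversity_atoms (restr A E)" "a \<in> atoms (restr A E)" "a \<in> E"
        using cE_div[OF zd] a_def divE atomsE by auto
      have aC: "a \<in> car" using aE E_car by auto
      have za: "le z a" "le z' a" using cE_prop[OF at(3)] cE_prop[OF at(4)] a_def ce by auto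
      have xb: "le x (cE E A x)" "le y (cE E A y)" "cE E A x \<in> E" "cE E A y \<in> E"
        "cE E A x \<in> diversity_atoms (restr A E)" "cE E A y \<in> diversity_atoms (restr A E)"
        using cE_prop at cE_div tr atomsE by auto
      show ?thesis
      proof (cases "cE E A x = cE E A y \<and> cE E A y = cE E A z")
        case False
        define b where "b = cE E A x"
        define c where "c = cE E A y"
        have bcC: "b \<in> car" "c \<in> car" using xb b_def c_def E_car by auto
        have "le (cm x y) (cm b c)" using cm_mono[of x b y c] ac bcC xb b_def c_def by auto
        hence "le z (cm b c)" using ltrans[of z "cm x y" "cm b c"] tr ac bcC by auto
        hence abc: "le a (cm b c)" using Eatom_above[of a "cm b c" z] aE E_cm xb b_def c_def at za by auto
        have nb: "\<not> (b = c \<and> c = a)" using False a_def b_def c_def by auto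
        have "le a (cm x y)"
          using spec[unfolded special_extension_def, rule_format, of b c a] xb(5,6) aE(1)
             b_def c_def nb abc at xb(1,2) by blast
        hence z'xy: "le z' (cm x y)" using ltrans[of z' a "cm x y"] za ac aC by auto
        have "Ctri E A (CDiv x i) (CDiv y j) (CDiv z' k')"
          by (rule Ctri_ddd[THEN iffD2]) (use tr z'd False ce a_def z'xy in auto)
        thus ?thesis using uv u v by blast
      next
        case True
        hence T: "Trel i j k" and bc: "cE E A x = a" "cE E A y = a" using tr a_def by auto
        have "le (cm x y) (cm a a)" using cm_mono[of x a y a] ac aC xb bc by auto
        hence "le z (cm a a)" using ltrans[of z "cm x y" "cm a a"] tr ac aC by auto
        hence aaa: "le a (cm a a)" using Eatom_above[of a "cm a a" z] aE E_cm at za by auto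
        have S2: "\<forall>x'\<in>atoms A. \<forall>y'\<in>atoms A. le x' a \<longrightarrow> le y' a \<longrightarrow> mt (cm x' y') a \<noteq> ZZ"
          using spec[unfolded special_extension_def, rule_format, of a a a] aE(1) aaa by blast
        have H: "\<exists>q\<in>diversity_atoms A. cE E A q = a \<and> le z' (cm p q)"
          if p: "p \<in> diversity_atoms A" "cE E A p = a" for p
        proof -
          have pa: "p \<in> atoms A" "le p a" using p div_atom cE_prop by auto
          have pc: "p \<in> car" using pa atom_car by auto
          have "mt (cm p z') a \<noteq> ZZ" using S2 pa at za by auto
          then obtain q where q: "q \<in> atoms A" "le q (mt (cm p z') a)"
            using atomic_A[of "mt (cm p z') a"] pc ac aC by auto
          have qc: "q \<in> car" using q atom_car by auto
          have qa: "le q a" "le q (cm p z')"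
            using q ltrans[of q "mt (cm p z') a" a] ltrans[of q "mt (cm p z') a" "cm p z'"]
              mt_le1[of "cm p z'" a] mt_le2[of "cm p z'" a] pc ac aC qc by auto
          have "le z' (cm p q)" using tri_perm[OF pa(1) at(4) q(1) qa(2)] .
          moreover have "le a (cp II)" using aE divE by auto
          hence "le q (cp II)" using ltrans[of q a "cp II"] qa qc aC by auto
          hence qd: "q \<in> diversity_atoms A" using q div_def' by auto
          moreover have "cE E A q = a" using cE_eq q aE qa by auto
          ultimately show ?thesis by blast
        qed
        consider (hh) "N \<le> i" "N \<le> j" | (lh) "i < N" "N \<le> j" | (hl) "N \<le> i" "j < N"
          | (ll) "i < N" "j < N" by linarith
        thus ?thesis
        proof cases
          case hh
          obtain q where q: "q \<in> diversity_atoms A" "cE E A q = a" "le z' (cm x q)" using H tr bc by blast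
          have "CDiv x k' \<in> X" using unifD[OF X tr(1) tr(1) hh(1) Nk'] uv u by auto
          moreover have "CDiv q k' \<in> Y" using unifD[OF Y tr(2) q(1) hh(2) Nk'] uv v bc q by auto
          moreover have "Ctri E A (CDiv x k') (CDiv q k') (CDiv z' k')"
            by (rule Ctri_ddd[THEN iffD2]) (use tr q z'd in \<open>simp add: Trel_def\<close>)
          ultimately show ?thesis by blast
        next
          case lh
          obtain q where q: "q \<in> diversity_atoms A" "cE E A q = a" "le z' (cm x q)" using H tr bc by blast
          have "CDiv q k' \<in> Y" using unifD[OF Y tr(2) q(1) lh(2) Nk'] uv v bc q by auto
          moreover have "Ctri E A (CDiv x i) (CDiv q k') (CDiv z' k')"
            by (rule Ctri_ddd[THEN iffD2]) (use tr q z'd lh Nk' in \<open>simp add: Trel_def\<close>)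
          ultimately show ?thesis using uv u by blast
        next
          case hl
          obtain q where q: "q \<in> diversity_atoms A" "cE E A q = a" "le z' (cm y q)" using H tr bc by blast
          have qc: "q \<in> car" using q div_car by auto
          have q3: "le z' (cm q y)" using q cm_comm[of y q] qc ac by auto
          have "CDiv q k' \<in> X" using unifD[OF X tr(1) q(1) hl(1) Nk'] uv u bc q by auto
          moreover have "Ctri E A (CDiv q k') (CDiv y j) (CDiv z' k')"
            by (rule Ctri_ddd[THEN iffD2]) (use tr q z'd hl Nk' q3 in \<open>simp add: Trel_def\<close>)
          ultimately show ?thesis using uv v by blast
        next
          case ll
          thus ?thesis using T Nk unfolding Trel_def by auto
        qed
      qed
    qed
  qed
qed

lemma divA_fin: "finite (diversity_atoms A)"
  using fin div_car by (meson finite_subset subsetI)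

lemma unif_finite: "finite {X. unif N X}"
proof -
  define low where "low = insert CId ((\<lambda>(z,i). CDiv z i) ` (diversity_atoms A \<times> {..<N}))"
  define g where "g X = (X \<inter> low, {cE E A z | z. z \<in> diversity_atoms A \<and> CDiv z N \<in> X})" for X
  have fl: "finite low" unfolding low_def using divA_fin by auto
  have lowchar: "\<exists>z k. u = CDiv z k \<and> z \<in> diversity_atoms A \<and> N \<le> k" if "u \<in> CAt A" "u \<notin> low" for u
    using that unfolding low_def by (cases u) (auto simp: image_iff)
  have sub: "X \<subseteq> Y" if XY: "unif N X" "unif N Y" "g X = g Y" for X Y
  proof
    fix u assume uX: "u \<in> X"
    show "u \<in> Y"
    proof (cases "u \<in> low")
      case True
      thus ?thesis using XY uX unfolding g_def by auto
    next
      case False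
      then obtain z k where zk: "u = CDiv z k" "z \<in> diversity_atoms A" "N \<le> k"
        using lowchar uX unif_sub XY by blast
      have "CDiv z N \<in> X" using unifD[OF XY(1) zk(2) zk(2) zk(3)] uX zk by auto
      hence "cE E A z \<in> snd (g X)" using zk unfolding g_def by auto
      hence "cE E A z \<in> snd (g Y)" using XY by simp
      then obtain z' where z': "z' \<in> diversity_atoms A" "CDiv z' N \<in> Y" "cE E A z' = cE E A z"
        unfolding g_def by auto
      show ?thesis using unifD[OF XY(2) z'(1) zk(2) _ zk(3) z'(3) z'(2)] zk by auto
    qed
  qed
  have "inj_on g {X. unif N X}"
  proof (rule inj_onI)
    fix X Y assume "X \<in> {X. unif N X}" "Y \<in> {X. unif N X}" "g X = g Y"
    thus "X = Y" using sub[of X Y] sub[of Y X] by auto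
  qed
  moreover have "g ` {X. unif N X} \<subseteq> Pow low \<times> Pow (cE E A ` diversity_atoms A)"
    unfolding g_def by auto
  moreover have "finite (Pow low \<times> Pow (cE E A ` diversity_atoms A))" using fl divA_fin by auto
  ultimately show ?thesis by (meson finite_imageD finite_subset)
qed


lemma C_simps[simp]: "rcar (CEA E A) = Pow (CAt A)" "rjoin (CEA E A) = (\<union>)" "rmeet (CEA E A) = (\<inter>)"
  "rcompl (CEA E A) = (\<lambda>X. CAt A - X)" "rzero (CEA E A) = {}" "rone (CEA E A) = CAt A"
  "rid (CEA E A) = {CId}" "rconv (CEA E A) = (\<lambda>X. X)" "rcomp (CEA E A) = (\<lambda>X Y. Cc X Y)"
  by (simp_all add: CEA_def)

lemma C_pt[simp]: "rconv (CEA E A) X = X" "rcomp (CEA E A) X Y = Cc X Y" "rjoin (CEA E A) X Y = X \<union> Y"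
  "rmeet (CEA E A) X Y = X \<inter> Y" "rcompl (CEA E A) X = CAt A - X"
  by (simp_all add: CEA_def)

lemma leq_C: "leq (CEA E A) x y \<longleftrightarrow> x \<subseteq> y" unfolding leq_def by auto

lemma Cc_sub: "Cc X Y \<subseteq> CAt A" using Ctri_tri by blast

lemma C_full: "subalg (Pow (CAt A)) (CEA E A)"
  unfolding subalg_def using Cc_sub by auto

lemma atoms_C: "atoms (CEA E A) = (\<lambda>u. {u}) ` CAt A"
  by (rule atoms_pow) auto

abbreviation SB where "SB \<equiv> Sg (CEA E A) (atoms (CEA E A))"
abbreviation BB where "BB \<equiv> restr (CEA E A) SB"

lemma SB_subalg: "subalg SB (CEA E A)"
  by (rule Sg_subalg) (use C_full atoms_C in auto)

lemma SB_sub: "SB \<subseteq> Pow (CAt A)" using SB_subalg unfolding subalg_def by auto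

lemma SB_atoms: "atoms (CEA E A) \<subseteq> SB" by (rule Sg_ub)

lemma sing_SB: "u \<in> CAt A \<Longrightarrow> {u} \<in> SB" using SB_atoms atoms_C by auto

lemma U_subalg: "subalg {X. \<exists>N. unif N X} (CEA E A)"
  unfolding subalg_def
proof (intro conjI ballI)
  show "{X. \<exists>N. unif N X} \<subseteq> rcar (CEA E A)" using unif_sub by auto
  show "rzero (CEA E A) \<in> {X. \<exists>N. unif N X}" using unif_empty by auto
  show "rone (CEA E A) \<in> {X. \<exists>N. unif N X}" using unif_CAt by auto
  show "rid (CEA E A) \<in> {X. \<exists>N. unif N X}" using unif_CId by auto
  fix x assume "x \<in> {X. \<exists>N. unif N X}"
  then obtain N where x: "unif N x" by auto
  show "rcompl (CEA E A) x \<in> {X. \<exists>N. unif N X}" "rconv (CEA E A) x \<in> {X. \<exists>N. unif N X}"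
    using x unif_cp by auto
  fix y assume "y \<in> {X. \<exists>N. unif N X}"
  then obtain M where y: "unif M y" by auto
  have x': "unif (max N M) x" and y': "unif (max N M) y" using unif_mono x y by auto
  show "rjoin (CEA E A) x y \<in> {X. \<exists>N. unif N X}" "rmeet (CEA E A) x y \<in> {X. \<exists>N. unif N X}"
        "rcomp (CEA E A) x y \<in> {X. \<exists>N. unif N X}"
    using unif_un[OF x' y'] unif_int[OF x' y'] unif_comp[OF x' y'] by auto
qed

lemma SB_U: "SB \<subseteq> {X. \<exists>N. unif N X}"
  by (rule Sg_least[OF U_subalg]) (use atoms_C unif_single in auto)

lemma atoms_BB: "atoms BB = atoms (CEA E A)"
proof -
  have "atoms BB = (\<lambda>u. {u}) ` CAt A"
    by (rule atoms_pow) (use SB_sub sing_SB in auto)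
  thus ?thesis using atoms_C by simp
qed

lemma part1: "countable (rcar BB) \<and> atomic BB \<and> symmetric BB \<and> integral BB \<and> generated_by_atoms BB"
proof (intro conjI)
  have "SB \<subseteq> (\<Union>N. {X. unif N X})" using SB_U by auto
  moreover have "countable (\<Union>N. {X. unif N X})"
    using unif_finite by (intro countable_UN) (auto intro: countable_finite)
  ultimately show "countable (rcar BB)" by (auto intro: countable_subset)
  show "atomic BB" unfolding atomic_def
  proof (intro ballI impI)
    fix x assume x: "x \<in> rcar BB" "x \<noteq> rzero BB"
    then obtain u where u: "u \<in> x" by auto
    have "u \<in> CAt A" using u x SB_sub by auto
    hence "{u} \<in> atoms BB" using atoms_BB atoms_C by auto
    moreover have "leq BB {u} x" using u leq_C by simp
    ultimately show "\<exists>a\<in>atoms BB. leq BB a x" by blast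
  qed
  show "symmetric BB" unfolding symmetric_def by simp
  show "integral BB" unfolding integral_def using atoms_BB atoms_C by simp
  show "generated_by_atoms BB" unfolding generated_by_atoms_def
  proof
    have "subalg SB BB" using subalg_restr[of SB "CEA E A" SB] SB_sub SB_subalg by simp
    thus "Sg BB (atoms BB) \<subseteq> rcar BB" using Sg_least[of SB BB "atoms BB"] atoms_BB SB_atoms by simp
    show "rcar BB \<subseteq> Sg BB (atoms BB)"
    proof (rule Sg_greatest)
      fix S assume "subalg S BB" "atoms BB \<subseteq> S"
      hence "subalg S (CEA E A)" "atoms (CEA E A) \<subseteq> S"
        using subalg_restr[of SB "CEA E A" S] SB_sub atoms_BB by auto
      thus "rcar BB \<subseteq> S" using Sg_least[of S "CEA E A" "atoms (CEA E A)"] by simp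
    qed
  qed
qed

lemma part2: "at_struct (CEA E A) = at_struct BB"
  unfolding at_struct_def atoms_BB by (simp add: fun_eq_iff)

lemma part3: "isomorphic (CEA E A) (Cm (at_struct (CEA E A)))"
proof -
  define f where "f X = (\<lambda>u. {u}) ` X" for X :: "'a catom set"
  let ?S = "at_struct (CEA E A)"
  have S: "ats_at ?S = f (CAt A)"
     "ats_C ?S = {(x, y, z). x \<in> f (CAt A) \<and> y \<in> f (CAt A) \<and> z \<in> f (CAt A) \<and> z \<subseteq> Cc x y}"
     "ats_cnv ?S = (\<lambda>x. if x \<in> f (CAt A) then x else undefined)"
     "ats_I ?S = {x \<in> f (CAt A). x \<subseteq> {CId}}"
    unfolding at_struct_def atoms_C f_def by (auto simp: leq_C fun_eq_iff)
  have inj: "inj_on f X" for X unfolding f_def by (rule inj_onI) auto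
  have fmem: "{u} \<in> f X \<longleftrightarrow> u \<in> X" for u X unfolding f_def by auto
  have "iso f (CEA E A) (Cm ?S)" unfolding iso_def Cm_def
  proof (simp only: ra.simps S C_simps, intro conjI ballI)
    show "bij_betw f (Pow (CAt A)) (Pow (f (CAt A)))"
    proof (rule bij_betw_imageI)
      show "inj_on f (Pow (CAt A))" using inj by auto
      show "f ` Pow (CAt A) = Pow (f (CAt A))"
      proof (intro set_eqI iffI)
        fix Y assume "Y \<in> Pow (f (CAt A))"
        hence "Y = f {u. {u} \<in> Y}" "{u. {u} \<in> Y} \<in> Pow (CAt A)" unfolding f_def by auto
        thus "Y \<in> f ` Pow (CAt A)" by blast
      qed (auto simp: f_def)
    qed
    show "f {} = {}" by (simp add: f_def)
    show "f (CAt A) = f (CAt A)" ..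
    show "f {CId} = {x \<in> f (CAt A). x \<subseteq> {CId}}" unfolding f_def by auto
    fix x assume x: "x \<in> Pow (CAt A)"
    show "f (CAt A - x) = f (CAt A) - f x" unfolding f_def by auto
    show "f x = (\<lambda>x. if x \<in> f (CAt A) then x else undefined) ` f x"
      using x unfolding f_def by auto
    fix y assume y: "y \<in> Pow (CAt A)"
    show "f (x \<union> y) = f x \<union> f y" unfolding f_def by auto
    show "f (x \<inter> y) = f x \<inter> f y" unfolding f_def by auto
    show "f (Cc x y) = {z. \<exists>xa\<in>f x. \<exists>ya\<in>f y. (xa, ya, z) \<in>
           {(x, y, z). x \<in> f (CAt A) \<and> y \<in> f (CAt A) \<and> z \<in> f (CAt A) \<and> z \<subseteq> Cc x y}}"
    proof (intro set_eqI iffI)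
      fix z assume "z \<in> f (Cc x y)"
      then obtain w u v where w: "z = {w}" "u \<in> x" "v \<in> y" "Ctri E A u v w" unfolding f_def by auto
      have "w \<in> CAt A" using w Ctri_tri by blast
      thus "z \<in> {z. \<exists>xa\<in>f x. \<exists>ya\<in>f y. (xa, ya, z) \<in>
           {(x, y, z). x \<in> f (CAt A) \<and> y \<in> f (CAt A) \<and> z \<in> f (CAt A) \<and> z \<subseteq> Cc x y}}"
        using w x y unfolding f_def by blast
    next
      fix z assume "z \<in> {z. \<exists>xa\<in>f x. \<exists>ya\<in>f y. (xa, ya, z) \<in>
           {(x, y, z). x \<in> f (CAt A) \<and> y \<in> f (CAt A) \<and> z \<in> f (CAt A) \<and> z \<subseteq> Cc x y}}"
      then obtain u v w where "u \<in> x" "v \<in> y" "z = {w}" "w \<in> Cc {u} {v}" unfolding f_def by auto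
      thus "z \<in> f (Cc x y)" unfolding f_def by auto
    qed
  qed
  thus ?thesis unfolding isomorphic_def by blast
qed

lemma part4: "completion_of (CEA E A) BB"
  unfolding completion_of_def
proof (intro conjI)
  show "complete (CEA E A)" unfolding complete_def is_lub_def
  proof (intro allI impI)
    fix X assume "X \<subseteq> rcar (CEA E A)"
    thus "\<exists>s. s \<in> rcar (CEA E A) \<and> (\<forall>x\<in>X. leq (CEA E A) x s) \<and>
       (\<forall>u\<in>rcar (CEA E A). (\<forall>x\<in>X. leq (CEA E A) x u) \<longrightarrow> leq (CEA E A) s u)"
      by (intro exI[of _ "\<Union>X"]) (auto simp: leq_C)
  qed
  show "subalg (rcar BB) (CEA E A)" using SB_subalg by simp
  show "BB = restr (CEA E A) (rcar BB)" by simp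
  show "dense_sub (rcar BB) (CEA E A)" unfolding dense_sub_def
  proof (intro ballI impI)
    fix x assume x: "x \<in> rcar (CEA E A)" "x \<noteq> rzero (CEA E A)"
    then obtain u where u: "u \<in> x" by auto
    hence "{u} \<in> SB" using sing_SB x by auto
    thus "\<exists>b\<in>rcar BB. b \<noteq> rzero (CEA E A) \<and> leq (CEA E A) b x" using u by (auto simp: leq_C)
  qed
qed


lemma J_subalg: assumes S: "S \<subseteq> car" "ZZ \<in> S" "TT \<in> S" "II \<in> S" "\<And>x. x \<in> S \<Longrightarrow> cp x \<in> S"
  "\<And>x y. x \<in> S \<Longrightarrow> y \<in> S \<Longrightarrow> jn x y \<in> S" "\<And>x y. x \<in> S \<Longrightarrow> y \<in> S \<Longrightarrow> mt x y \<in> S"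
  "\<And>x y. x \<in> S \<Longrightarrow> y \<in> S \<Longrightarrow> cm x y \<in> S"
  shows "subalg ((\<lambda>a. Jfun A a 0) ` S) (CEA E A)"
  unfolding subalg_def
proof (intro conjI ballI)
  show "(\<lambda>a. Jfun A a 0) ` S \<subseteq> rcar (CEA E A)" using J_sub by auto
  show "rzero (CEA E A) \<in> (\<lambda>a. Jfun A a 0) ` S" using J_Z S by (auto intro: image_eqI[of _ _ ZZ])
  show "rone (CEA E A) \<in> (\<lambda>a. Jfun A a 0) ` S" using J_T S by (auto intro: image_eqI[of _ _ TT])
  show "rid (CEA E A) \<in> (\<lambda>a. Jfun A a 0) ` S" using J_I S by (auto intro: image_eqI[of _ _ II])
  fix x assume "x \<in> (\<lambda>a. Jfun A a 0) ` S"
  then obtain a where a: "a \<in> S" "x = J a" by auto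
  have ac: "a \<in> car" using a S by auto
  show "rcompl (CEA E A) x \<in> (\<lambda>a. Jfun A a 0) ` S"
    using J_cp[OF ac] a S by (auto intro: image_eqI[of _ _ "cp a"])
  show "rconv (CEA E A) x \<in> (\<lambda>a. Jfun A a 0) ` S" using a by auto
  fix y assume "y \<in> (\<lambda>a. Jfun A a 0) ` S"
  then obtain b where b: "b \<in> S" "y = J b" by auto
  have bc: "b \<in> car" using b S by auto
  show "rjoin (CEA E A) x y \<in> (\<lambda>a. Jfun A a 0) ` S"
    using J_jn[OF ac bc] a b S by (auto intro: image_eqI[of _ _ "jn a b"])
  show "rmeet (CEA E A) x y \<in> (\<lambda>a. Jfun A a 0) ` S"
    using J_mt[OF ac bc] a b S by (auto intro: image_eqI[of _ _ "mt a b"])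
  have "rcomp (CEA E A) x y = J (cm a b)" using J_cm[OF ac bc] a b by simp
  thus "rcomp (CEA E A) x y \<in> (\<lambda>a. Jfun A a 0) ` S" using S(8)[OF a(1) b(1)] by blast
qed

lemma J_iso: assumes S: "S \<subseteq> car"
  shows "iso (\<lambda>a. Jfun A a 0) (restr A S) (restr (CEA E A) ((\<lambda>a. Jfun A a 0) ` S))"
  unfolding iso_def
proof (intro conjI ballI)
  show "bij_betw (\<lambda>a. Jfun A a 0) (rcar (restr A S)) (rcar (restr (CEA E A) ((\<lambda>a. Jfun A a 0) ` S)))"
    unfolding bij_betw_def inj_on_def using J_inj S by auto
  show "Jfun A (rzero (restr A S)) 0 = rzero (restr (CEA E A) ((\<lambda>a. Jfun A a 0) ` S))" using J_Z by simp
  show "Jfun A (rone (restr A S)) 0 = rone (restr (CEA E A) ((\<lambda>a. Jfun A a 0) ` S))" using J_T by simp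
  show "Jfun A (rid (restr A S)) 0 = rid (restr (CEA E A) ((\<lambda>a. Jfun A a 0) ` S))" using J_I by simp
  fix x assume x: "x \<in> rcar (restr A S)"
  hence xc: "x \<in> car" using S by auto
  show "Jfun A (rcompl (restr A S) x) 0 = rcompl (restr (CEA E A) ((\<lambda>a. Jfun A a 0) ` S)) (Jfun A x 0)"
    using J_cp[OF xc] by simp
  show "Jfun A (rconv (restr A S) x) 0 = rconv (restr (CEA E A) ((\<lambda>a. Jfun A a 0) ` S)) (Jfun A x 0)"
    using xc by simp
  fix y assume y: "y \<in> rcar (restr A S)"
  hence yc: "y \<in> car" using S by auto
  show "Jfun A (rjoin (restr A S) x y) 0 = rjoin (restr (CEA E A) ((\<lambda>a. Jfun A a 0) ` S)) (Jfun A x 0) (Jfun A y 0)"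
    using J_jn[OF xc yc] by simp
  show "Jfun A (rmeet (restr A S) x y) 0 = rmeet (restr (CEA E A) ((\<lambda>a. Jfun A a 0) ` S)) (Jfun A x 0) (Jfun A y 0)"
    using J_mt[OF xc yc] by simp
  show "Jfun A (rcomp (restr A S) x y) 0 = rcomp (restr (CEA E A) ((\<lambda>a. Jfun A a 0) ` S)) (Jfun A x 0) (Jfun A y 0)"
    using J_cm[OF xc yc] by simp
qed

lemma restr_car: "restr A car = A" by (simp add: restr_def)

lemma part5: "subalg ((\<lambda>a. Jfun A a 0) ` E) (CEA E A) \<and> subalg ((\<lambda>a. Jfun A a 0) ` car) (CEA E A)
   \<and> (\<lambda>a. Jfun A a 0) ` E \<subseteq> (\<lambda>a. Jfun A a 0) ` car
   \<and> iso (\<lambda>a. Jfun A a 0) (restr A E) (restr (CEA E A) ((\<lambda>a. Jfun A a 0) ` E))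
   \<and> iso (\<lambda>a. Jfun A a 0) A (restr (CEA E A) ((\<lambda>a. Jfun A a 0) ` car))"
proof (intro conjI)
  show "subalg ((\<lambda>a. Jfun A a 0) ` E) (CEA E A)"
    by (rule J_subalg) (use E_sub E_Z E_T E_I E_cp E_jn E_mt E_cm in auto)
  show "subalg ((\<lambda>a. Jfun A a 0) ` car) (CEA E A)"
    by (rule J_subalg) auto
  show "(\<lambda>a. Jfun A a 0) ` E \<subseteq> (\<lambda>a. Jfun A a 0) ` car" using E_sub by auto
  show "iso (\<lambda>a. Jfun A a 0) (restr A E) (restr (CEA E A) ((\<lambda>a. Jfun A a 0) ` E))"
    using J_iso E_sub by auto
  show "iso (\<lambda>a. Jfun A a 0) A (restr (CEA E A) ((\<lambda>a. Jfun A a 0) ` car))"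
    using J_iso[of car] restr_car by simp
qed

lemma unif_common: "finite X \<Longrightarrow> X \<subseteq> {X. \<exists>N. unif N X} \<Longrightarrow> \<exists>N. \<forall>x\<in>X. unif N x"
proof (induction X rule: finite_induct)
  case empty thus ?case by auto
next
  case (insert x F)
  then obtain N where N: "\<forall>y\<in>F. unif N y" by auto
  obtain M where M: "unif M x" using insert by auto
  have "\<forall>y\<in>insert x F. unif (max N M) y" using N M unif_mono by auto
  thus ?case by blast
qed

lemma SB_cl: "rzero (CEA E A) \<in> SB" "rone (CEA E A) \<in> SB" "rid (CEA E A) \<in> SB"
  "x \<in> SB \<Longrightarrow> rcompl (CEA E A) x \<in> SB"
  "x \<in> SB \<Longrightarrow> y \<in> SB \<Longrightarrow> rjoin (CEA E A) x y \<in> SB"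
  "x \<in> SB \<Longrightarrow> y \<in> SB \<Longrightarrow> rmeet (CEA E A) x y \<in> SB"
  "x \<in> SB \<Longrightarrow> y \<in> SB \<Longrightarrow> rcomp (CEA E A) x y \<in> SB"
  using SB_subalg[unfolded subalg_def] by blast+

lemma SN_subalg: "subalg {Y \<in> SB. unif N Y} (CEA E A)"
  unfolding subalg_def
proof (intro conjI ballI)
  show "{Y \<in> SB. unif N Y} \<subseteq> rcar (CEA E A)" using SB_sub by auto
  show "rzero (CEA E A) \<in> {Y \<in> SB. unif N Y}" using SB_cl(1) unif_empty by simp
  show "rone (CEA E A) \<in> {Y \<in> SB. unif N Y}" using SB_cl(2) unif_CAt by simp
  show "rid (CEA E A) \<in> {Y \<in> SB. unif N Y}" using SB_cl(3) unif_CId by simp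
  fix x assume x: "x \<in> {Y \<in> SB. unif N Y}"
  hence x': "x \<in> SB" "unif N x" by auto
  show "rcompl (CEA E A) x \<in> {Y \<in> SB. unif N Y}"
    using SB_cl(4)[OF x'(1)] unif_cp[OF x'(2)] by simp
  show "rconv (CEA E A) x \<in> {Y \<in> SB. unif N Y}" using x by simp
  fix y assume y: "y \<in> {Y \<in> SB. unif N Y}"
  hence y': "y \<in> SB" "unif N y" by auto
  show "rjoin (CEA E A) x y \<in> {Y \<in> SB. unif N Y}" using SB_cl(5)[OF x'(1) y'(1)] unif_un[OF x'(2) y'(2)] by simp
  show "rmeet (CEA E A) x y \<in> {Y \<in> SB. unif N Y}" using SB_cl(6)[OF x'(1) y'(1)] unif_int[OF x'(2) y'(2)] by simp
  show "rcomp (CEA E A) x y \<in> {Y \<in> SB. unif N Y}" using SB_cl(7)[OF x'(1) y'(1)] unif_comp[OF x'(2) y'(2)] by simp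
qed

lemma part6: "\<forall>X. X \<subseteq> rcar BB \<and> finite X \<longrightarrow> finite (Sg BB X)"
proof (intro allI impI)
  fix X assume X: "X \<subseteq> rcar BB \<and> finite X"
  have "X \<subseteq> {X. \<exists>N. unif N X}" using X SB_U by auto
  then obtain N where N: "\<forall>x\<in>X. unif N x" using unif_common X by blast
  have "subalg {Y \<in> SB. unif N Y} BB"
    using subalg_restr[of SB "CEA E A" "{Y \<in> SB. unif N Y}"] SB_sub SN_subalg by auto
  moreover have "X \<subseteq> {Y \<in> SB. unif N Y}" using X N by auto
  ultimately have "Sg BB X \<subseteq> {Y \<in> SB. unif N Y}" by (rule Sg_least)
  hence "Sg BB X \<subseteq> {Y. unif N Y}" by auto
  thus "finite (Sg BB X)" using unif_finite finite_subset by blast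
qed

lemma fin_join: "finite P \<Longrightarrow> P \<subseteq> E \<Longrightarrow> \<exists>e\<in>E. \<forall>z\<in>atoms A. le z e \<longleftrightarrow> (\<exists>p\<in>P. le z p)"
proof (induction P rule: finite_induct)
  case empty
  have "\<forall>z\<in>atoms A. \<not> le z ZZ" using le_Z atom_car atom_nz by blast
  thus ?case using E_Z by blast
next
  case (insert p F)
  then obtain e where e: "e \<in> E" "\<forall>z\<in>atoms A. le z e \<longleftrightarrow> (\<exists>p\<in>F. le z p)" by auto
  have pE: "p \<in> E" using insert by auto
  have "\<forall>z\<in>atoms A. le z (jn e p) \<longleftrightarrow> (\<exists>q\<in>insert p F. le z q)"
  proof
    fix z assume z: "z \<in> atoms A"
    have "le z (jn e p) \<longleftrightarrow> le z e \<or> le z p" using atom_jn[OF z] e(1) pE E_car by auto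
    also have "\<dots> \<longleftrightarrow> (\<exists>q\<in>insert p F. le z q)" using e(2) z by auto
    finally show "le z (jn e p) \<longleftrightarrow> (\<exists>q\<in>insert p F. le z q)" .
  qed
  thus ?case using E_jn e pE by blast
qed

lemma part7: "\<forall>b\<in>rcar BB. \<exists>e\<in>(\<lambda>a. Jfun A a 0) ` E. almost_same (CEA E A) b e"
proof
  fix b assume "b \<in> rcar BB"
  hence bS: "b \<in> SB" by simp
  then obtain N where N: "unif N b" using SB_U by auto
  have bsub: "b \<subseteq> CAt A" using unif_sub N by auto
  define P where "P = cE E A ` {z \<in> diversity_atoms A. CDiv z N \<in> b}"
  have finP: "finite P" unfolding P_def using divA_fin by auto
  have PE: "P \<subseteq> atoms (restr A E)" unfolding P_def using cE_prop div_atom by auto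
  hence "P \<subseteq> E" using atomsE by auto
  then obtain e where e: "e \<in> E" "\<forall>z\<in>atoms A. le z e \<longleftrightarrow> (\<exists>p\<in>P. le z p)" using fin_join finP by blast
  have key: "CDiv z k \<in> b \<longleftrightarrow> CDiv z k \<in> J e" if z: "z \<in> diversity_atoms A" "N \<le> k" for z k
  proof -
    have za: "z \<in> atoms A" using z div_atom by auto
    have "CDiv z k \<in> J e \<longleftrightarrow> (\<exists>p\<in>P. le z p)" using J_CDiv z e za by auto
    also have "\<dots> \<longleftrightarrow> cE E A z \<in> P" using cE_eq[OF za] PE cE_prop[OF za] by auto
    also have "\<dots> \<longleftrightarrow> CDiv z k \<in> b"
    proof
      assume "cE E A z \<in> P"
      then obtain z' where z': "z' \<in> diversity_atoms A" "CDiv z' N \<in> b" "cE E A z = cE E A z'"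
        unfolding P_def by auto
      show "CDiv z k \<in> b" using unifD[OF N z'(1) z(1) _ z(2)] z' by auto
    next
      assume "CDiv z k \<in> b"
      hence "CDiv z N \<in> b" using unifD[OF N z(1) z(1) z(2)] by auto
      thus "cE E A z \<in> P" unfolding P_def using z by auto
    qed
    finally show ?thesis by simp
  qed
  define low where "low = insert CId ((\<lambda>(z,i). CDiv z i) ` (diversity_atoms A \<times> {..<N}))"
  have fl: "finite low" unfolding low_def using divA_fin by auto
  define D where "D = (b \<inter> (CAt A - J e)) \<union> (J e \<inter> (CAt A - b))"
  have Dlow: "D \<subseteq> low"
  proof
    fix u assume u: "u \<in> D"
    hence uC: "u \<in> CAt A" unfolding D_def by auto
    show "u \<in> low"
    proof (cases u)
      case CId thus ?thesis unfolding low_def by auto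
    next
      case (CDiv z k)
      hence z: "z \<in> diversity_atoms A" using uC by auto
      have "\<not> N \<le> k" using key[OF z] u CDiv unfolding D_def by auto
      thus ?thesis using CDiv z unfolding low_def by auto
    qed
  qed
  hence finD: "finite D" using fl finite_subset by auto
  have "almost_same (CEA E A) b (J e)"
    unfolding almost_same_def
  proof (intro exI[of _ "(\<lambda>u. {u}) ` D"] conjI)
    show "finite ((\<lambda>u. {u}) ` D)" using finD by auto
    show "(\<lambda>u. {u}) ` D \<subseteq> atoms (CEA E A)" unfolding atoms_C D_def by auto
    have eq: "rjoin (CEA E A) (rmeet (CEA E A) b (rcompl (CEA E A) (J e)))
            (rmeet (CEA E A) (J e) (rcompl (CEA E A) b)) = D" unfolding D_def by simp
    show "is_lub (CEA E A) ((\<lambda>u. {u}) ` D) (rjoin (CEA E A) (rmeet (CEA E A) b (rcompl (CEA E A) (J e)))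
            (rmeet (CEA E A) (J e) (rcompl (CEA E A) b)))"
      unfolding eq is_lub_def leq_C using D_def by auto
  qed
  thus "\<exists>e\<in>(\<lambda>a. Jfun A a 0) ` E. almost_same (CEA E A) b e" using e by blast
qed

end

theorem theorem1:
  fixes A :: "'a ra" and E :: "'a set"
  assumes "is_RA A" and "finite (rcar A)" and "symmetric A" and "integral A"
    and "subalg E A"
    and "is_RA (restr A E)" and "finite E" and "symmetric (restr A E)" and "integral (restr A E)"
    and "special_extension E A"
  defines "C \<equiv> CEA E A"
  defines "B \<equiv> restr (CEA E A) (Sg (CEA E A) (atoms (CEA E A)))"
  defines "E' \<equiv> (\<lambda>a. Jfun A a 0) ` E"
  defines "A' \<equiv> (\<lambda>a. Jfun A a 0) ` rcar A"
  shows
    "(countable (rcar B) \<and> atomic B \<and> symmetric B \<and> integral B \<and> generated_by_atoms B)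
     \<and> at_struct C = at_struct B
     \<and> isomorphic C (Cm (at_struct B))
     \<and> completion_of C B
     \<and> (subalg E' C \<and> subalg A' C \<and> E' \<subseteq> A'
         \<and> iso (\<lambda>a. Jfun A a 0) (restr A E) (restr C E')
         \<and> iso (\<lambda>a. Jfun A a 0) A (restr C A'))
     \<and> (\<forall>X. X \<subseteq> rcar B \<and> finite X \<longrightarrow> finite (Sg B X))
     \<and> (\<forall>b\<in>rcar B. \<exists>e\<in>E'. almost_same C b e)"
proof -
  interpret SE A E by (unfold_locales) (use assms in auto)
  have p3: "isomorphic (CEA E A) (Cm (at_struct BB))" using part3 part2 by simp
  show ?thesis unfolding C_def B_def E'_def A'_def
    using part1 part2 p3 part4 part5 part6 part7 by blast
qed

end
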